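(* For every $y\in I$ and $\varrho\in(\omega^{\min},\omega^{\max})$ let $\widehat\mu^\varrho(y)=\frac1{\mathbf{Var}^\varrho(\omega)}\sum_{z=y+1}^{\omega^{\max}}(z-\varrho)\mu^\varrho(z)$. Then the family of probability measures $\widehat\mu^\varrho$ on $I$ is stochastically nondecreasing in $\varrho$: for every bounded nondecreasing $\varphi:I\to\mathbb R$, $\varrho\mapsto\sum_{y\in I}\varphi(y)\widehat\mu^\varrho(y)$ is nondecreasing on $(\omega^{\min},\omega^{\max})$.
   Context: Fix extended integers $-\infty\le\omega^{\min}\le0$, $1\le\omega^{\max}\le\infty$ and $I=\{z\in\mathbb Z:\omega^{\min}-1<z<\omega^{\max}+1\}$. Let $f:I\to[0,\infty)$ be nondecreasing with $f(\omega^{\min})=0$ if $\omega^{\min}$ is finite and $f(z)>0$ for $z>\omega^{\min}$. Set $f(0)!=1$, $f(z)!=\prod_{y=1}^zf(y)$ for $z>0$, $f(z)!=1/\prod_{y=z+1}^0f(y)$ for $z<0$. Let $\bar\theta=\lim_{z\to\infty}\log f(z)$ if $\omega^{\max}=\infty$, $\bar\theta=\infty$ otherwise; $\underline\theta=\lim_{z\to\infty}\log f(-z)$ if $\omega^{\min}=-\infty$, $\underline\theta=-\infty$ otherwise; assume $\underline\theta<\bar\theta$. For $\theta\in(\underline\theta,\bar\theta)$, $Z(\theta)=\sum_{z\in I}e^{\theta z}/f(z)!<\infty$ and $\mu^\theta(z)=e^{\theta z}/(Z(\theta)f(z)!)$, $z\in I$. The mean $\varrho(\theta)=\sum_zz\mu^\theta(z)$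 is a strictly increasing bijection $(\underline\theta,\bar\theta)\to(\omega^{\min},\omega^{\max})$; $\mu^\varrho$ denotes $\mu^{\theta(\varrho)}$ and $\mathbf{Var}^\varrho(\omega)$ the variance of a $\mu^\varrho$-distributed $\omega$. *)

theory Defs
  imports "HOL-Analysis.Analysis"
begin

text \<open>Extended integers omega_min, omega_max are modelled as extended reals
  that are either infinite or integer-valued.\<close>

definition Iset :: "ereal \<Rightarrow> ereal \<Rightarrow> int set" where
  "Iset wmin wmax = {z. wmin - 1 < ereal (real_of_int z) \<and> ereal (real_of_int z) < wmax + 1}"

definition ffact :: "(int \<Rightarrow> real) \<Rightarrow> int \<Rightarrow> real" where
  "ffact f z = (if 0 \<le> z then (\<Prod>y\<in>{1..z}. f y) else 1 / (\<Prod>y\<in>{z+1..0}. f y))"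

definition theta_sup :: "ereal \<Rightarrow> (int \<Rightarrow> real) \<Rightarrow> ereal" where
  "theta_sup wmax f = (if wmax = \<infinity> then lim (\<lambda>n::nat. ereal (ln (f (int n)))) else \<infinity>)"

definition theta_inf :: "ereal \<Rightarrow> (int \<Rightarrow> real) \<Rightarrow> ereal" where
  "theta_inf wmin f = (if wmin = -\<infinity> then lim (\<lambda>n::nat. ereal (ln (f (- int n)))) else -\<infinity>)"

definition Zpart :: "ereal \<Rightarrow> ereal \<Rightarrow> (int \<Rightarrow> real) \<Rightarrow> real \<Rightarrow> real" where
  "Zpart wmin wmax f \<theta> = (\<Sum>\<^sub>\<infinity>z\<in>Iset wmin wmax. exp (\<theta> * real_of_int z) / ffact f z)"

definition mu_theta :: "ereal \<Rightarrow> ereal \<Rightarrow> (int \<Rightarrow> real) \<Rightarrow> real \<Rightarrow> int \<Rightarrow> real" where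
  "mu_theta wmin wmax f \<theta> z = exp (\<theta> * real_of_int z) / (Zpart wmin wmax f \<theta> * ffact f z)"

definition mean_theta :: "ereal \<Rightarrow> ereal \<Rightarrow> (int \<Rightarrow> real) \<Rightarrow> real \<Rightarrow> real" where
  "mean_theta wmin wmax f \<theta> = (\<Sum>\<^sub>\<infinity>z\<in>Iset wmin wmax. real_of_int z * mu_theta wmin wmax f \<theta> z)"

text \<open>theta(rho): the inverse of the (strictly increasing, bijective) mean map.\<close>
definition theta_of :: "ereal \<Rightarrow> ereal \<Rightarrow> (int \<Rightarrow> real) \<Rightarrow> real \<Rightarrow> real" where
  "theta_of wmin wmax f \<rho> = (THE \<theta>. theta_inf wmin f < ereal \<theta> \<and> ereal \<theta> < theta_sup wmax f
       \<and> mean_theta wmin wmax f \<theta> = \<rho>)"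

definition mu_rho :: "ereal \<Rightarrow> ereal \<Rightarrow> (int \<Rightarrow> real) \<Rightarrow> real \<Rightarrow> int \<Rightarrow> real" where
  "mu_rho wmin wmax f \<rho> z = mu_theta wmin wmax f (theta_of wmin wmax f \<rho>) z"

definition var_rho :: "ereal \<Rightarrow> ereal \<Rightarrow> (int \<Rightarrow> real) \<Rightarrow> real \<Rightarrow> real" where
  "var_rho wmin wmax f \<rho> = (\<Sum>\<^sub>\<infinity>z\<in>Iset wmin wmax. (real_of_int z - \<rho>)^2 * mu_rho wmin wmax f \<rho> z)"

definition muhat :: "ereal \<Rightarrow> ereal \<Rightarrow> (int \<Rightarrow> real) \<Rightarrow> real \<Rightarrow> int \<Rightarrow> real" where
  "muhat wmin wmax f \<rho> y = (1 / var_rho wmin wmax f \<rho>) *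
     (\<Sum>\<^sub>\<infinity>z\<in>{z\<in>Iset wmin wmax. y < z}. (real_of_int z - \<rho>) * mu_rho wmin wmax f \<rho> z)"

end

theory Submission
  imports Defs "HOL-Library.Nat_Bijection"
begin

lemma pow_le_exp:
  fixes x :: real assumes "0 \<le> x"
  shows "x ^ n \<le> real n ^ n * exp x"
proof (cases "n = 0")
  case True then show ?thesis using assms by simp
next
  case False
  hence np: "real n > 0" by simp
  have "x / n \<le> exp (x / n)"
    using exp_ge_add_one_self[of "x/n"] by linarith
  hence "(x / n) ^ n \<le> exp (x / n) ^ n"
    using assms np by (intro power_mono) auto
  also have "exp (x / n) ^ n = exp x"
    using np by (simp add: exp_of_nat_mult[symmetric])
  finally have "(x / n) ^ n \<le> exp x" .
  hence "real n ^ n * (x / n) ^ n \<le> real n ^ n * exp x"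
    by (intro mult_left_mono) auto
  also have "real n ^ n * (x / n) ^ n = x ^ n"
    using np by (simp add: power_divide)
  finally show ?thesis .
qed

lemma geom_int_summable:
  fixes a :: real assumes "a > 0"
  shows "(\<lambda>z::int. exp (- a * \<bar>real_of_int z\<bar>)) summable_on UNIV"
proof -
  let ?g = "\<lambda>z::int. exp (- a * \<bar>real_of_int z\<bar>)"
  have q: "exp (- a) < 1" using assms by simp
  have geo: "(\<lambda>n::nat. exp (-a) ^ n) summable_on UNIV"
    by (rule summable_nonneg_imp_summable_on) (use q in \<open>auto intro: summable_geometric\<close>)
  have e: "exp (- a * real n) = exp (-a) ^ n" for n :: nat
    by (simp add: exp_of_nat_mult[symmetric] mult.commute)
  have 1: "?g summable_on (range int)"
    by (subst summable_on_reindex) (use geo e in \<open>auto simp: o_def inj_on_def\<close>)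
  have 2: "?g summable_on (range (\<lambda>n. - int n))"
    by (subst summable_on_reindex) (use geo e in \<open>auto simp: o_def inj_on_def\<close>)
  have U: "(UNIV::int set) = range int \<union> range (\<lambda>n. - int n)"
  proof (intro set_eqI iffI)
    fix z :: int
    show "z \<in> range int \<union> range (\<lambda>n. - int n)"
    proof (cases "z \<ge> 0")
      case True
      hence "z = int (nat z)" by simp
      thus ?thesis by blast
    next
      case False
      hence "z = - int (nat (- z))" by simp
      thus ?thesis by blast
    qed
  qed simp
  show ?thesis unfolding U by (rule summable_on_union[OF 1 2])
qed

lemma poly_exp_int_summable:
  fixes a :: real assumes "a > 0"
  shows "(\<lambda>z::int. (1 + (real_of_int z)\<^sup>2) ^ k * exp (- a * \<bar>real_of_int z\<bar>)) summable_on UNIV"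
proof -
  define n where "n = 2 * k"
  define C where "C = (real n * 2 / a) ^ n * exp (a / 2)"
  have b: "(1 + (real_of_int z)\<^sup>2) ^ k * exp (- a * \<bar>real_of_int z\<bar>)
            \<le> C * exp (- (a/2) * \<bar>real_of_int z\<bar>)" for z
  proof -
    let ?x = "1 + \<bar>real_of_int z\<bar>"
    have "1 + (real_of_int z)\<^sup>2 \<le> ?x ^ 2"
      by (simp add: power2_eq_square algebra_simps)
    hence "(1 + (real_of_int z)\<^sup>2) ^ k \<le> (?x ^ 2) ^ k"
      by (intro power_mono) auto
    also have "\<dots> = ?x ^ n" by (simp add: n_def power_mult)
    also have "?x ^ n = (2 / a) ^ n * (a / 2 * ?x) ^ n"
    proof -
      have "(2 / a) ^ n * (a / 2 * ?x) ^ n = ((2 / a) * (a / 2 * ?x)) ^ n" by (simp only: power_mult_distrib)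
      also have "(2 / a) * (a / 2 * ?x) = ?x" using assms by simp
      finally show ?thesis by simp
    qed
    also have "(a / 2 * ?x) ^ n \<le> real n ^ n * exp (a / 2 * ?x)"
      by (rule pow_le_exp) (use assms in auto)
    finally have "(1 + (real_of_int z)\<^sup>2) ^ k \<le> (2 / a) ^ n * (real n ^ n * exp (a / 2 * ?x))"
      using assms by (simp add: mult_left_mono)
    hence "(1 + (real_of_int z)\<^sup>2) ^ k * exp (- a * \<bar>real_of_int z\<bar>)
           \<le> (2 / a) ^ n * (real n ^ n * exp (a / 2 * ?x)) * exp (- a * \<bar>real_of_int z\<bar>)"
      by (intro mult_right_mono) auto
    also have "\<dots> = ((2 / a) ^ n * real n ^ n) * (exp (a / 2 * ?x) * exp (- a * \<bar>real_of_int z\<bar>))"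
      by (simp only: mult.assoc)
    also have "exp (a / 2 * ?x) * exp (- a * \<bar>real_of_int z\<bar>) = exp (a / 2) * exp (- (a/2) * \<bar>real_of_int z\<bar>)"
    proof -
      have "a / 2 * ?x + - a * \<bar>real_of_int z\<bar> = a / 2 + - (a/2) * \<bar>real_of_int z\<bar>" by (simp add: field_simps)
      thus ?thesis by (simp only: exp_add[symmetric])
    qed
    also have "(2 / a) ^ n * real n ^ n = (real n * 2 / a) ^ n"
      by (simp add: power_mult_distrib[symmetric] mult.commute)
    also have "(real n * 2 / a) ^ n * (exp (a / 2) * exp (- (a/2) * \<bar>real_of_int z\<bar>)) = C * exp (- (a/2) * \<bar>real_of_int z\<bar>)"
      unfolding C_def by (simp only: mult.assoc)
    finally show ?thesis .
  qed
  have "(\<lambda>z::int. C * exp (- (a/2) * \<bar>real_of_int z\<bar>)) summable_on UNIV"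
    by (intro summable_on_cmult_right geom_int_summable) (use assms in auto)
  thus ?thesis
    by (rule summable_on_comparison_test) (use b in auto)
qed

lemma int_decode_sums:
  fixes F :: "int \<Rightarrow> real" assumes "F summable_on UNIV"
  shows "(\<lambda>n. F (int_decode n)) sums (\<Sum>\<^sub>\<infinity>z. F z)"
proof -
  have "(F has_sum (\<Sum>\<^sub>\<infinity>z. F z)) UNIV" using assms by simp
  hence "((\<lambda>n. F (int_decode n)) has_sum (\<Sum>\<^sub>\<infinity>z. F z)) UNIV"
    by (subst has_sum_reindex_bij_betw[OF bij_int_decode])
  thus ?thesis by (rule has_sum_imp_sums)
qed

lemma int_decode_summable:
  fixes F :: "int \<Rightarrow> real" assumes "F summable_on UNIV"
  shows "summable (\<lambda>n. F (int_decode n))"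
  using int_decode_sums[OF assms] by (rule sums_summable)

lemma exp_le_two:
  fixes t \<theta> \<delta> z :: real
  assumes "\<bar>t - \<theta>\<bar> \<le> \<delta>"
  shows "exp (t * z) \<le> exp ((\<theta> - \<delta>) * z) + exp ((\<theta> + \<delta>) * z)"
proof (cases "z \<ge> 0")
  case True
  hence "t * z \<le> (\<theta> + \<delta>) * z" using assms by (intro mult_right_mono) auto
  thus ?thesis by (smt (verit) exp_gt_zero exp_le_cancel_iff)
next
  case False
  hence "t * z \<le> (\<theta> - \<delta>) * z" using assms by (intro mult_right_mono_neg) auto
  thus ?thesis by (smt (verit) exp_gt_zero exp_le_cancel_iff)
qed

lemma deriv_int_exp_series:
  fixes c :: "int \<Rightarrow> real"
  assumes dpos: "\<delta> > 0"
    and s1: "(\<lambda>z. \<bar>real_of_int z * c z\<bar> * exp ((\<theta> - \<delta>) * real_of_int z)) summable_on UNIV"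
    and s2: "(\<lambda>z. \<bar>real_of_int z * c z\<bar> * exp ((\<theta> + \<delta>) * real_of_int z)) summable_on UNIV"
    and s0: "\<And>t. \<bar>t - \<theta>\<bar> \<le> \<delta> \<Longrightarrow> (\<lambda>z. c z * exp (t * real_of_int z)) summable_on UNIV"
  shows "((\<lambda>t. \<Sum>\<^sub>\<infinity>z. c z * exp (t * real_of_int z)) has_real_derivative
            (\<Sum>\<^sub>\<infinity>z. real_of_int z * c z * exp (\<theta> * real_of_int z))) (at \<theta>)"
proof -
  define d where "d = int_decode"
  define S where "S = {\<theta> - \<delta> .. \<theta> + \<delta>}"
  define f where "f n t = c (d n) * exp (t * real_of_int (d n))" for n t
  define f' where "f' n t = real_of_int (d n) * c (d n) * exp (t * real_of_int (d n))" for n t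
  define M where "M n = \<bar>real_of_int (d n) * c (d n)\<bar> * exp ((\<theta> - \<delta>) * real_of_int (d n))
       + \<bar>real_of_int (d n) * c (d n)\<bar> * exp ((\<theta> + \<delta>) * real_of_int (d n))" for n
  have inS: "t \<in> S \<longleftrightarrow> \<bar>t - \<theta>\<bar> \<le> \<delta>" for t unfolding S_def by auto
  have der: "(f n has_field_derivative f' n x) (at x within S)" for n x
    unfolding f_def f'_def by (auto intro!: derivative_eq_intros)
  have Msum: "summable M"
    unfolding M_def d_def
    by (intro summable_add int_decode_summable[OF s1] int_decode_summable[OF s2])
  have Mb: "norm (f' n x) \<le> M n" if "x \<in> S" for n x
  proof -
    have "norm (f' n x) = \<bar>real_of_int (d n) * c (d n)\<bar> * exp (x * real_of_int (d n))"
      unfolding f'_def by (simp add: abs_mult)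
    also have "\<dots> \<le> \<bar>real_of_int (d n) * c (d n)\<bar> * (exp ((\<theta> - \<delta>) * real_of_int (d n)) + exp ((\<theta> + \<delta>) * real_of_int (d n)))"
      by (intro mult_left_mono exp_le_two) (use that inS in auto)
    finally show ?thesis unfolding M_def by (simp add: algebra_simps)
  qed
  have uc: "uniformly_convergent_on S (\<lambda>n x. \<Sum>i<n. f' i x)"
    by (rule Weierstrass_m_test'[OF Mb Msum])
  have th: "\<theta> \<in> S" "\<theta> \<in> interior S" unfolding S_def using dpos by auto
  have sf: "summable (\<lambda>n. f n \<theta>)"
    unfolding f_def d_def by (rule int_decode_summable[OF s0]) (use dpos in simp)
  have cS: "convex S" unfolding S_def by (rule convex_real_interval)
  from has_field_derivative_series'(2)[OF cS der uc th(1) sf th(2)]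
  have D: "((\<lambda>x. \<Sum>n. f n x) has_field_derivative (\<Sum>n. f' n \<theta>)) (at \<theta>)"
    unfolding S_def using dpos by simp
  have s3: "(\<lambda>z. real_of_int z * c z * exp (\<theta> * real_of_int z)) summable_on UNIV"
  proof -
    have "(\<lambda>z. \<bar>real_of_int z * c z\<bar> * exp ((\<theta> - \<delta>) * real_of_int z)
             + \<bar>real_of_int z * c z\<bar> * exp ((\<theta> + \<delta>) * real_of_int z)) summable_on UNIV"
      by (intro summable_on_add s1 s2)
    hence "(\<lambda>z. norm (real_of_int z * c z * exp (\<theta> * real_of_int z))) summable_on UNIV"
    proof (rule summable_on_comparison_test)
      fix z :: int
      have "\<bar>real_of_int z * c z * exp (\<theta> * real_of_int z)\<bar>
          = \<bar>real_of_int z * c z\<bar> * exp (\<theta> * real_of_int z)" by (simp add: abs_mult)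
      also have "\<dots> \<le> \<bar>real_of_int z * c z\<bar> * (exp ((\<theta> - \<delta>) * real_of_int z) + exp ((\<theta> + \<delta>) * real_of_int z))"
        by (intro mult_left_mono exp_le_two) (use dpos in auto)
      finally show "norm (real_of_int z * c z * exp (\<theta> * real_of_int z))
          \<le> \<bar>real_of_int z * c z\<bar> * exp ((\<theta> - \<delta>) * real_of_int z)
             + \<bar>real_of_int z * c z\<bar> * exp ((\<theta> + \<delta>) * real_of_int z)"
        by (simp add: algebra_simps)
    qed simp
    thus ?thesis by (rule abs_summable_summable)
  qed
  have e1: "(\<Sum>n. f' n \<theta>) = (\<Sum>\<^sub>\<infinity>z. real_of_int z * c z * exp (\<theta> * real_of_int z))"
    using int_decode_sums[OF s3] unfolding f'_def d_def by (simp add: sums_iff)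
  have ev: "eventually (\<lambda>x. (\<Sum>n. f n x) = (\<Sum>\<^sub>\<infinity>z. c z * exp (x * real_of_int z))) (nhds \<theta>)"
  proof -
    have "eventually (\<lambda>x. x \<in> ball \<theta> \<delta>) (nhds \<theta>)"
      using dpos by (intro eventually_nhds_in_open) auto
    thus ?thesis
    proof (rule eventually_mono)
      fix x assume "x \<in> ball \<theta> \<delta>"
      hence "\<bar>x - \<theta>\<bar> \<le> \<delta>" by (auto simp: dist_real_def)
      from int_decode_sums[OF s0[OF this]]
      show "(\<Sum>n. f n x) = (\<Sum>\<^sub>\<infinity>z. c z * exp (x * real_of_int z))"
        unfolding f_def d_def by (simp add: sums_iff)
    qed
  qed
  show ?thesis
    using D by (subst (asm) DERIV_cong_ev[OF refl ev e1]) 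
qed

definition Phi :: "(int \<Rightarrow> real) \<Rightarrow> int \<Rightarrow> real" where
  "Phi \<phi> z = (\<Sum>y\<in>{0..<z}. \<phi> y) - (\<Sum>y\<in>{z..<0}. \<phi> y)"

lemma sum_concat_int:
  fixes m n p :: int
  assumes "m \<le> n" "n \<le> p"
  shows "sum f {m..<n} + sum f {n..<p} = sum f {m..<p}"
proof -
  have "{m..<p} = {m..<n} \<union> {n..<p}" using assms by auto
  thus ?thesis by (simp add: sum.union_disjoint ivl_disj_int(4))
qed

lemma Phi_diff:
  fixes a z :: int assumes "a \<le> z"
  shows "Phi \<phi> z - Phi \<phi> a = (\<Sum>y\<in>{a..<z}. \<phi> y)"
proof (cases "0 \<le> a")
  case True
  hence "{z..<0} = {}" "{a..<0} = {}" using assms by auto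
  moreover have "sum \<phi> {0..<a} + sum \<phi> {a..<z} = sum \<phi> {0..<z}"
    using True assms by (intro sum_concat_int)
  ultimately show ?thesis unfolding Phi_def by simp
next
  case False
  show ?thesis
  proof (cases "0 \<le> z")
    case True
    hence "{z..<0} = {}" "{0..<a} = {}" using False by auto
    moreover have "sum \<phi> {a..<0} + sum \<phi> {0..<z} = sum \<phi> {a..<z}"
      using True False by (intro sum_concat_int) auto
    ultimately show ?thesis unfolding Phi_def by simp
  next
    case F2: False
    hence "{0..<z} = {}" "{0..<a} = {}" using False by auto
    moreover have "sum \<phi> {a..<z} + sum \<phi> {z..<0} = sum \<phi> {a..<0}"
      using F2 assms by (intro sum_concat_int) auto
    ultimately show ?thesis unfolding Phi_def by simp
  qed
qed

lemma Phi_step: "Phi \<phi> (z + 1) - Phi \<phi> z = \<phi> z"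
proof -
  have "{z..<z+1} = {z}" by auto
  thus ?thesis using Phi_diff[of z "z+1" \<phi>] by simp
qed

lemma sum_ivl_lower:
  fixes a z :: int assumes "mono \<phi>" "a \<le> z"
  shows "real_of_int (z - a) * \<phi> a \<le> (\<Sum>y\<in>{a..<z}. \<phi> y)"
proof -
  have "of_nat (card {a..<z}) * \<phi> a \<le> (\<Sum>y\<in>{a..<z}. \<phi> y)"
    by (rule sum_bounded_below) (use assms in \<open>auto simp: mono_def\<close>)
  thus ?thesis using assms by simp
qed

lemma sum_ivl_upper:
  fixes a z :: int assumes "mono \<phi>" "a \<le> z"
  shows "(\<Sum>y\<in>{a..<z}. \<phi> y) \<le> real_of_int (z - a) * \<phi> (z - 1)"
proof -
  have "(\<Sum>y\<in>{a..<z}. \<phi> y) \<le> of_nat (card {a..<z}) * \<phi> (z - 1)"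
    by (rule sum_bounded_above) (use assms in \<open>auto simp: mono_def\<close>)
  thus ?thesis using assms by simp
qed

lemma chord_props:
  fixes a b :: int
  assumes mono: "mono \<phi>" and ab: "a < b"
  defines "s \<equiv> (Phi \<phi> b - Phi \<phi> a) / real_of_int (b - a)"
  shows "a \<le> z \<Longrightarrow> z \<le> b \<Longrightarrow> Phi \<phi> z \<le> Phi \<phi> a + s * real_of_int (z - a)"
    and "z \<le> a \<Longrightarrow> Phi \<phi> a + s * real_of_int (z - a) \<le> Phi \<phi> z"
    and "b \<le> z \<Longrightarrow> Phi \<phi> a + s * real_of_int (z - a) \<le> Phi \<phi> z"
proof -
  have bapos: "real_of_int (b - a) > 0" using ab by simp
  have sdef: "s * real_of_int (b - a) = Phi \<phi> b - Phi \<phi> a"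
    unfolding s_def using bapos by simp
  have sab: "Phi \<phi> b - Phi \<phi> a = (\<Sum>y\<in>{a..<b}. \<phi> y)" using ab by (intro Phi_diff) simp
  have s_ge: "\<phi> a \<le> s"
  proof -
    have "real_of_int (b - a) * \<phi> a \<le> s * real_of_int (b - a)"
      using sum_ivl_lower[OF mono, of a b] ab sab sdef by simp
    thus ?thesis using bapos by (simp add: mult.commute)
  qed
  have s_le: "s \<le> \<phi> (b - 1)"
  proof -
    have "s * real_of_int (b - a) \<le> real_of_int (b - a) * \<phi> (b - 1)"
      using sum_ivl_upper[OF mono, of a b] ab sab sdef by simp
    thus ?thesis using bapos by (simp add: mult.commute)
  qed
  show "Phi \<phi> z \<le> Phi \<phi> a + s * real_of_int (z - a)" if az: "a \<le> z" and zb: "z \<le> b"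
  proof -
    define L where "L = (\<Sum>y\<in>{a..<z}. \<phi> y)"
    define R where "R = (\<Sum>y\<in>{z..<b}. \<phi> y)"
    have LR: "L + R = Phi \<phi> b - Phi \<phi> a" unfolding L_def R_def sab
      using az zb by (intro sum_concat_int)
    have Lz: "Phi \<phi> z - Phi \<phi> a = L" unfolding L_def using az by (rule Phi_diff)
    have key: "L * real_of_int (b - z) \<le> R * real_of_int (z - a)"
    proof (cases "a = z \<or> z = b")
      case True
      thus ?thesis unfolding L_def R_def by auto
    next
      case False
      hence az': "a < z" and zb': "z < b" using az zb by auto
      have "L \<le> real_of_int (z - a) * \<phi> (z - 1)" unfolding L_def using sum_ivl_upper[OF mono az] .
      moreover have "real_of_int (b - z) * \<phi> z \<le> R" unfolding R_def using sum_ivl_lower[OF mono zb] .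
      moreover have "\<phi> (z - 1) \<le> \<phi> z" using mono by (simp add: mono_def)
      ultimately have "L * real_of_int (b - z) \<le> real_of_int (z - a) * \<phi> z * real_of_int (b - z)"
        using zb' az' by (smt (verit, best) mult_right_mono of_int_0_le_iff mult_left_mono)
      also have "\<dots> = real_of_int (z - a) * (real_of_int (b - z) * \<phi> z)" by simp
      also have "\<dots> \<le> real_of_int (z - a) * R"
        using \<open>real_of_int (b - z) * \<phi> z \<le> R\<close> az' by (intro mult_left_mono) auto
      finally show ?thesis by (simp add: mult.commute)
    qed
    have "L * real_of_int (b - a) \<le> (L + R) * real_of_int (z - a)"
    proof -
      have "L * real_of_int (b - a) = L * real_of_int (b - z) + L * real_of_int (z - a)"
        by (simp add: algebra_simps)
      thus ?thesis using key by (simp add: algebra_simps)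
    qed
    hence "L * real_of_int (b - a) \<le> s * real_of_int (b - a) * real_of_int (z - a)"
      using LR sdef by simp
    hence "L \<le> s * real_of_int (z - a)" using bapos
      by (simp add: mult.commute mult.left_commute)
    thus ?thesis using Lz by simp
  qed
  show "Phi \<phi> a + s * real_of_int (z - a) \<le> Phi \<phi> z" if za: "z \<le> a"
  proof -
    have "Phi \<phi> a - Phi \<phi> z \<le> real_of_int (a - z) * \<phi> (a - 1)"
      using Phi_diff[OF za] sum_ivl_upper[OF mono za] by simp
    also have "\<dots> \<le> real_of_int (a - z) * s"
    proof -
      have "\<phi> (a - 1) \<le> \<phi> a" using mono by (simp add: mono_def)
      thus ?thesis using za s_ge by (intro mult_left_mono) auto
    qed
    finally show ?thesis by (simp add: algebra_simps)
  qed
  show "Phi \<phi> a + s * real_of_int (z - a) \<le> Phi \<phi> z" if bz: "b \<le> z"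
  proof -
    have "real_of_int (z - b) * s \<le> real_of_int (z - b) * \<phi> b"
      using bz mono s_le by (intro mult_left_mono) (auto simp: mono_def intro: order_trans)
    also have "\<dots> \<le> Phi \<phi> z - Phi \<phi> b"
      using Phi_diff[OF bz] sum_ivl_lower[OF mono bz] by simp
    finally have "real_of_int (z - b) * s \<le> Phi \<phi> z - Phi \<phi> b" .
    moreover have "Phi \<phi> b = Phi \<phi> a + s * real_of_int (b - a)" using sdef by simp
    ultimately show ?thesis by (simp add: algebra_simps)
  qed
qed

lemma quad_sign:
  fixes r1 r2 :: real
  assumes mono: "mono \<phi>" and r12: "r1 \<le> r2"
  shows "\<exists>c0 c1. \<forall>z::int. 0 \<le> (real_of_int z - r1) * (real_of_int z - r2) * (Phi \<phi> z - (c0 + c1 * real_of_int z))"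
proof -
  define a where "a = floor r1"
  define b where "b = max (ceiling r2) (a + 1)"
  have ab: "a < b" unfolding b_def by simp
  define s where "s = (Phi \<phi> b - Phi \<phi> a) / real_of_int (b - a)"
  note ch = chord_props[OF mono ab, folded s_def]
  have "0 \<le> (real_of_int z - r1) * (real_of_int z - r2) * (Phi \<phi> z - ((Phi \<phi> a - s * real_of_int a) + s * real_of_int z))" for z
  proof -
    have eq: "(Phi \<phi> a - s * real_of_int a) + s * real_of_int z = Phi \<phi> a + s * real_of_int (z - a)"
      by (simp add: algebra_simps)
    consider "z \<le> a" | "b \<le> z" | "a < z" "z < b" by linarith
    thus ?thesis
    proof cases
      case 1
      hence "real_of_int z \<le> r1" unfolding a_def by linarith
      hence "0 \<le> (real_of_int z - r1) * (real_of_int z - r2)" using r12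
        by (intro mult_nonpos_nonpos) auto
      moreover have "0 \<le> Phi \<phi> z - (Phi \<phi> a + s * real_of_int (z - a))" using ch(2)[OF 1] by simp
      ultimately show ?thesis unfolding eq by simp
    next
      case 2
      hence "r2 \<le> real_of_int z" unfolding b_def by linarith
      moreover have "r1 \<le> real_of_int z" using 2 ab unfolding a_def by linarith
      ultimately have "0 \<le> (real_of_int z - r1) * (real_of_int z - r2)"
        by (intro mult_nonneg_nonneg) auto
      moreover have "0 \<le> Phi \<phi> z - (Phi \<phi> a + s * real_of_int (z - a))" using ch(3)[OF 2] by simp
      ultimately show ?thesis unfolding eq by simp
    next
      case 3
      hence "r1 < real_of_int z" unfolding a_def by linarith
      moreover have "real_of_int z < r2"
      proof -
        have "z < ceiling r2" using 3 unfolding b_def by linarith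
        thus ?thesis by (simp add: less_ceiling_iff)
      qed
      ultimately have "(real_of_int z - r1) * (real_of_int z - r2) \<le> 0"
        by (intro mult_nonneg_nonpos) auto
      moreover have "Phi \<phi> z - (Phi \<phi> a + s * real_of_int (z - a)) \<le> 0" using ch(1) 3 by simp
      ultimately show ?thesis unfolding eq by (simp add: mult_nonpos_nonpos)
    qed
  qed
  thus ?thesis by blast
qed

definition pbd :: "(int \<Rightarrow> real) \<Rightarrow> bool" where
  "pbd g \<longleftrightarrow> (\<exists>C k. \<forall>z. \<bar>g z\<bar> \<le> C * (1 + (real_of_int z)\<^sup>2) ^ k)"

lemma pbd_const[simp]: "pbd (\<lambda>z. c)"
  unfolding pbd_def by (rule exI[of _ "\<bar>c\<bar>"], rule exI[of _ 0]) simp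

lemma pbd_id[simp]: "pbd (\<lambda>z. real_of_int z)"
proof -
  have "\<bar>real_of_int z\<bar> \<le> 1 * (1 + (real_of_int z)\<^sup>2) ^ 1" for z
  proof (cases "\<bar>real_of_int z\<bar> \<le> 1")
    case True thus ?thesis by (simp add: add_increasing2)
  next
    case False
    hence "\<bar>real_of_int z\<bar> \<le> \<bar>real_of_int z\<bar> * \<bar>real_of_int z\<bar>" using mult_left_mono[of 1 "\<bar>real_of_int z\<bar>" "\<bar>real_of_int z\<bar>"] False by linarith
    also have "\<dots> = real_of_int z * real_of_int z" by (rule abs_mult_self_eq)
    finally show ?thesis by (simp add: power2_eq_square)
  qed
  thus ?thesis unfolding pbd_def by blast
qed

lemma pbd_bound_nonneg: "\<bar>x\<bar> \<le> C * (1 + (r::real)\<^sup>2) ^ k \<Longrightarrow> 0 \<le> C"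
proof -
  assume a: "\<bar>x\<bar> \<le> C * (1 + r\<^sup>2) ^ k"
  have "0 < (1 + r\<^sup>2) ^ k" by (simp add: add_pos_nonneg)
  moreover have "0 \<le> C * (1 + r\<^sup>2) ^ k" using a abs_ge_zero order_trans by blast
  ultimately show ?thesis by (simp add: zero_le_mult_iff)
qed

lemma pbd_mult[simp]: "pbd g \<Longrightarrow> pbd h \<Longrightarrow> pbd (\<lambda>z. g z * h z)"
proof -
  assume "pbd g" "pbd h"
  then obtain C1 k1 C2 k2 where 1: "\<And>z. \<bar>g z\<bar> \<le> C1 * (1 + (real_of_int z)\<^sup>2) ^ k1"
    and 2: "\<And>z. \<bar>h z\<bar> \<le> C2 * (1 + (real_of_int z)\<^sup>2) ^ k2" unfolding pbd_def by blast
  have "\<bar>g z * h z\<bar> \<le> (C1 * C2) * (1 + (real_of_int z)\<^sup>2) ^ (k1 + k2)" for z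
  proof -
    have "\<bar>g z * h z\<bar> = \<bar>g z\<bar> * \<bar>h z\<bar>" by (simp add: abs_mult)
    also have "\<dots> \<le> (C1 * (1 + (real_of_int z)\<^sup>2) ^ k1) * (C2 * (1 + (real_of_int z)\<^sup>2) ^ k2)"
      by (intro mult_mono 1 2) (use pbd_bound_nonneg[OF 1[of z]] in auto)
    finally show ?thesis by (simp add: power_add algebra_simps)
  qed
  thus ?thesis unfolding pbd_def by blast
qed

lemma pbd_add[simp]: "pbd g \<Longrightarrow> pbd h \<Longrightarrow> pbd (\<lambda>z. g z + h z)"
proof -
  assume "pbd g" "pbd h"
  then obtain C1 k1 C2 k2 where 1: "\<And>z. \<bar>g z\<bar> \<le> C1 * (1 + (real_of_int z)\<^sup>2) ^ k1"
    and 2: "\<And>z. \<bar>h z\<bar> \<le> C2 * (1 + (real_of_int z)\<^sup>2) ^ k2" unfolding pbd_def by blast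
  have "\<bar>g z + h z\<bar> \<le> (C1 + C2) * (1 + (real_of_int z)\<^sup>2) ^ (k1 + k2)" for z
  proof -
    let ?s = "1 + (real_of_int z)\<^sup>2"
    have s1: "1 \<le> ?s" by simp
    have "?s ^ k1 \<le> ?s ^ (k1 + k2)" "?s ^ k2 \<le> ?s ^ (k1 + k2)"
      using s1 by (intro power_increasing; simp)+
    moreover have "0 \<le> C1" "0 \<le> C2" using pbd_bound_nonneg[OF 1[of z]] pbd_bound_nonneg[OF 2[of z]] .
    ultimately have "C1 * ?s ^ k1 + C2 * ?s ^ k2 \<le> (C1 + C2) * ?s ^ (k1 + k2)"
      by (simp add: distrib_right add_mono mult_left_mono)
    thus ?thesis using 1[of z] 2[of z] by linarith
  qed
  thus ?thesis unfolding pbd_def by blast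
qed

lemma pbd_minus[simp]: "pbd g \<Longrightarrow> pbd (\<lambda>z. - g z)"
  unfolding pbd_def by simp

lemma pbd_diff[simp]: "pbd g \<Longrightarrow> pbd h \<Longrightarrow> pbd (\<lambda>z. g z - h z)"
  using pbd_add[of g "\<lambda>z. - h z"] by simp

lemma pbd_abs[simp]: "pbd g \<Longrightarrow> pbd (\<lambda>z. \<bar>g z\<bar>)"
  unfolding pbd_def by simp

lemma pbd_cmult[simp]: "pbd g \<Longrightarrow> pbd (\<lambda>z. c * g z)"
  using pbd_mult[of "\<lambda>z. c" g] by simp

lemma pbd_power[simp]: "pbd g \<Longrightarrow> pbd (\<lambda>z. g z ^ n)"
  by (induction n) (simp_all del: pbd_mult add: pbd_mult)

locale zrp =
  fixes wmin wmax :: ereal and f :: "int \<Rightarrow> real"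
  assumes wmin: "wmin = -\<infinity> \<or> (\<exists>k::int. k \<le> 0 \<and> wmin = ereal (real_of_int k))"
    and wmax: "wmax = \<infinity> \<or> (\<exists>k::int. 1 \<le> k \<and> wmax = ereal (real_of_int k))"
    and f_mono: "mono_on (Iset wmin wmax) f"
    and f_pos: "\<forall>z\<in>Iset wmin wmax. wmin < ereal (real_of_int z) \<longrightarrow> 0 < f z"
    and theta_lt: "theta_inf wmin f < theta_sup wmax f"
begin

abbreviation "I \<equiv> Iset wmin wmax"
abbreviation "ts \<equiv> theta_sup wmax f"
abbreviation "ti \<equiv> theta_inf wmin f"

definition p :: "real \<Rightarrow> int \<Rightarrow> real" where
  "p \<theta> z = exp (\<theta> * real_of_int z) / ffact f z"

definition U :: "real \<Rightarrow> bool" where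
  "U \<theta> \<longleftrightarrow> ti < ereal \<theta> \<and> ereal \<theta> < ts"

lemma I_iff: "z \<in> I \<longleftrightarrow>
     (\<forall>k::int. wmin = ereal (real_of_int k) \<longrightarrow> k \<le> z) \<and> (\<forall>k::int. wmax = ereal (real_of_int k) \<longrightarrow> z \<le> k)"
proof -
  have A: "wmin - 1 < ereal (real_of_int z) \<longleftrightarrow> (\<forall>k::int. wmin = ereal (real_of_int k) \<longrightarrow> k \<le> z)"
    using wmin by (auto simp: one_ereal_def)
  have B: "ereal (real_of_int z) < wmax + 1 \<longleftrightarrow> (\<forall>k::int. wmax = ereal (real_of_int k) \<longrightarrow> z \<le> k)"
    using wmax by (auto simp: one_ereal_def)
  show ?thesis unfolding Iset_def using A B by auto
qed

lemma zero_I[simp]: "0 \<in> I" and one_I[simp]: "1 \<in> I"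
  using wmin wmax by (auto simp: I_iff)

lemma I_between: "x \<in> I \<Longrightarrow> y \<in> I \<Longrightarrow> x \<le> z \<Longrightarrow> z \<le> y \<Longrightarrow> z \<in> I"
  unfolding I_iff by (metis order.trans)

lemma I_up: "wmax = \<infinity> \<Longrightarrow> 0 \<le> z \<Longrightarrow> z \<in> I"
  using wmin unfolding I_iff by auto

lemma I_down: "wmin = -\<infinity> \<Longrightarrow> z \<le> 0 \<Longrightarrow> z \<in> I"
  using wmax unfolding I_iff by auto

lemma gt_wmin: "x \<in> I \<Longrightarrow> x < y \<Longrightarrow> wmin < ereal (real_of_int y)"
  using wmin unfolding I_iff by auto

lemma gt_wmin1: "1 \<le> y \<Longrightarrow> wmin < ereal (real_of_int y)"
  using wmin by auto

lemma f_pos_I: "y \<in> I \<Longrightarrow> wmin < ereal (real_of_int y) \<Longrightarrow> 0 < f y"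
  using f_pos by auto

lemma ffact_pos: assumes "z \<in> I" shows "ffact f z > 0"
proof (cases "0 \<le> z")
  case True
  have "(\<Prod>y\<in>{1..z}. f y) > 0"
  proof (rule prod_pos)
    fix y assume y: "y \<in> {1..z}"
    hence "y \<in> I" using I_between[OF zero_I assms] by auto
    thus "0 < f y" using f_pos_I gt_wmin1 y by auto
  qed
  thus ?thesis using True unfolding ffact_def by simp
next
  case False
  have "(\<Prod>y\<in>{z+1..0}. f y) > 0"
  proof (rule prod_pos)
    fix y assume y: "y \<in> {z+1..0}"
    hence "y \<in> I" using I_between[OF assms zero_I] by auto
    thus "0 < f y" using f_pos_I gt_wmin[OF assms] y by auto
  qed
  thus ?thesis using False unfolding ffact_def by simp
qed

lemma p_pos: "z \<in> I \<Longrightarrow> p \<theta> z > 0"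
  unfolding p_def using ffact_pos by simp

lemma ffact_step:
  assumes z: "z \<in> I" and z1: "z + 1 \<in> I"
  shows "ffact f (z + 1) = ffact f z * f (z + 1)"
proof (cases "0 \<le> z")
  case True
  have "{1..z+1} = insert (z+1) {1..z}" using True by auto
  thus ?thesis using True unfolding ffact_def by simp
next
  case False
  define P where "P = (\<Prod>y\<in>{z+2..0}. f y)"
  have fz1: "f (z+1) > 0" using f_pos_I[OF z1 gt_wmin[OF z, of "z+1"]] by simp
  have "{z+1..0} = insert (z+1) {z+2..0}" using False by auto
  hence P1: "(\<Prod>y\<in>{z+1..0}. f y) = f (z+1) * P" unfolding P_def by simp
  have a: "ffact f (z + 1) = 1 / P"
  proof (cases "z = -1")
    case True thus ?thesis unfolding ffact_def P_def by simp
  next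
    case False2: False
    hence "\<not> 0 \<le> z + 1" using False by simp
    thus ?thesis unfolding ffact_def P_def by (simp add: add.assoc)
  qed
  show ?thesis unfolding a using False P1 fz1 unfolding ffact_def by simp
qed

lemma p_step:
  assumes "z \<in> I" "z + 1 \<in> I"
  shows "p \<theta> (z + 1) = p \<theta> z * exp \<theta> / f (z + 1)"
  unfolding p_def ffact_step[OF assms] by (simp add: distrib_left exp_add)

lemma U_between: "U a \<Longrightarrow> U b \<Longrightarrow> a \<le> t \<Longrightarrow> t \<le> b \<Longrightarrow> U t"
  unfolding U_def by (meson ereal_less_eq(3) le_less_trans less_le_trans)

lemma U_exists: "\<exists>\<theta>. U \<theta>"
  using ereal_dense2[OF theta_lt] unfolding U_def by blast

lemma U_dense:
  assumes "U \<theta>"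
  shows "\<exists>c0 c1. U c0 \<and> U c1 \<and> c0 < \<theta> \<and> \<theta> < c1"
proof -
  obtain c1 where c1: "ereal \<theta> < ereal c1" "ereal c1 < ts" using ereal_dense2 assms unfolding U_def by blast
  obtain c0 where c0: "ti < ereal c0" "ereal c0 < ereal \<theta>" using ereal_dense2 assms unfolding U_def by blast
  have "U c1" unfolding U_def using c1 assms unfolding U_def by (meson less_trans)
  moreover have "U c0" unfolding U_def using c0 assms unfolding U_def by (meson less_trans)
  moreover have "c0 < \<theta>" "\<theta> < c1" using c0 c1 by auto
  ultimately show ?thesis by blast
qed

definition Ysup :: "nat \<Rightarrow> ereal" where "Ysup n = ereal (ln (f (int (Suc n))))"
definition Yinf :: "nat \<Rightarrow> ereal" where "Yinf n = ereal (ln (f (- int n)))"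

lemma ts_SUP: assumes "wmax = \<infinity>" shows "ts = (SUP n. Ysup n)"
proof -
  have inc: "incseq Ysup"
  proof (rule incseq_SucI)
    fix n
    have a: "int (Suc n) \<in> I" "int (Suc (Suc n)) \<in> I" using I_up[OF assms] by auto
    have "f (int (Suc n)) \<le> f (int (Suc (Suc n)))" by (rule mono_onD[OF f_mono a]) simp
    moreover have "0 < f (int (Suc n))" using f_pos_I[OF a(1) gt_wmin1] by simp
    ultimately show "Ysup n \<le> Ysup (Suc n)" unfolding Ysup_def by simp
  qed
  have "(\<lambda>n. ereal (ln (f (int (Suc n))))) \<longlonglongrightarrow> (SUP n. Ysup n)"
    using LIMSEQ_SUP[OF inc] unfolding Ysup_def[abs_def] .
  hence "(\<lambda>n. ereal (ln (f (int n)))) \<longlonglongrightarrow> (SUP n. Ysup n)"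
    by (rule LIMSEQ_imp_Suc)
  thus ?thesis unfolding theta_sup_def using assms by (simp add: limI)
qed

lemma ti_INF: assumes "wmin = -\<infinity>" shows "ti = (INF n. Yinf n)"
proof -
  have dec: "decseq Yinf"
  proof (rule decseq_SucI)
    fix n
    have a: "- int (Suc n) \<in> I" "- int n \<in> I" using I_down[OF assms] by auto
    have "f (- int (Suc n)) \<le> f (- int n)" by (rule mono_onD[OF f_mono a]) simp
    moreover have "0 < f (- int (Suc n))" using f_pos_I[OF a(1)] assms by simp
    ultimately show "Yinf (Suc n) \<le> Yinf n" unfolding Yinf_def by simp
  qed
  have "(\<lambda>n. ereal (ln (f (- int n)))) \<longlonglongrightarrow> (INF n. Yinf n)"
    using LIMSEQ_INF[OF dec] unfolding Yinf_def[abs_def] .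
  thus ?thesis unfolding theta_inf_def using assms by (simp add: limI)
qed

lemma ts_cases: "ts = \<infinity> \<or> (wmax = \<infinity> \<and> (\<exists>s. ts = ereal s))"
proof -
  have "ts \<noteq> -\<infinity>" using theta_lt by auto
  thus ?thesis unfolding theta_sup_def by (cases "theta_sup wmax f") (auto simp: theta_sup_def split: if_splits)
qed

lemma ti_cases: "ti = -\<infinity> \<or> (wmin = -\<infinity> \<and> (\<exists>s. ti = ereal s))"
proof -
  have "ti \<noteq> \<infinity>" using theta_lt by auto
  thus ?thesis unfolding theta_inf_def by (cases "theta_inf wmin f") (auto simp: theta_inf_def split: if_splits)
qed

lemma ts_eventually:
  assumes "wmax = \<infinity>" "ereal c < ts"
  shows "\<exists>N::nat. \<forall>n\<ge>N. exp c < f (int n)"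
proof -
  have "ereal c < (SUP n. Ysup n)" using assms ts_SUP by simp
  then obtain m where "ereal c < Ysup m" by (meson less_SUP_iff)
  hence lt: "c < ln (f (int (Suc m)))" unfolding Ysup_def by simp
  have "exp c < f (int n)" if "n \<ge> Suc m" for n
  proof -
    have a: "int (Suc m) \<in> I" "int n \<in> I" using I_up[OF assms(1)] by auto
    have pos: "0 < f (int (Suc m))" using f_pos_I[OF a(1) gt_wmin1] by simp
    have "exp c < f (int (Suc m))" using lt pos by (metis exp_less_cancel_iff exp_ln)
    also have "\<dots> \<le> f (int n)" by (rule mono_onD[OF f_mono a]) (use that in simp)
    finally show ?thesis .
  qed
  thus ?thesis by blast
qed

lemma ts_bound:
  assumes "wmax = \<infinity>" "ts = ereal s" "1 \<le> y"
  shows "f y \<le> exp s"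
proof -
  define n where "n = nat (y - 1)"
  have n: "y = int (Suc n)" using assms(3) unfolding n_def by simp
  have "Ysup n \<le> (SUP n. Ysup n)" by (rule SUP_upper) simp
  hence "Ysup n \<le> ereal s" using assms ts_SUP by simp
  hence "ln (f y) \<le> s" using n unfolding Ysup_def by simp
  moreover have "0 < f y" using f_pos_I[OF I_up[OF assms(1)] gt_wmin1] assms(3) by simp
  ultimately show ?thesis by (metis exp_le_cancel_iff exp_ln)
qed

lemma ti_eventually:
  assumes "wmin = -\<infinity>" "ti < ereal c"
  shows "\<exists>N::nat. \<forall>n\<ge>N. f (- int n) < exp c"
proof -
  have "(INF n. Yinf n) < ereal c" using assms ti_INF by simp
  then obtain m where "Yinf m < ereal c" by (meson INF_less_iff)
  hence lt: "ln (f (- int m)) < c" unfolding Yinf_def by simp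
  have "f (- int n) < exp c" if "n \<ge> m" for n
  proof -
    have a: "- int n \<in> I" "- int m \<in> I" using I_down[OF assms(1)] by auto
    have pos: "0 < f (- int m)" using f_pos_I[OF a(2)] assms by simp
    have "f (- int n) \<le> f (- int m)" by (rule mono_onD[OF f_mono a]) (use that in simp)
    also have "f (- int m) < exp c" using lt pos by (metis exp_less_cancel_iff exp_ln)
    finally show ?thesis .
  qed
  thus ?thesis by blast
qed

lemma ti_bound:
  assumes "wmin = -\<infinity>" "ti = ereal s" "y \<le> 0"
  shows "exp s \<le> f y"
proof -
  define n where "n = nat (- y)"
  have n: "y = - int n" using assms(3) unfolding n_def by simp
  have "(INF n. Yinf n) \<le> Yinf n" by (rule INF_lower) simp
  hence "ereal s \<le> Yinf n" using assms ti_INF by simp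
  hence "s \<le> ln (f y)" using n unfolding Yinf_def by simp
  moreover have "0 < f y" using f_pos_I[OF I_down[OF assms(1) assms(3)]] assms(1) by simp
  ultimately show ?thesis by (metis exp_le_cancel_iff exp_ln)
qed

end

context zrp
begin

lemma p_nonneg: "z \<in> I \<Longrightarrow> 0 \<le> p \<theta> z"
  using p_pos[of z \<theta>] by simp

lemma K_I: "wmax = ereal (real_of_int K) \<Longrightarrow> K \<in> I"
  using wmin wmax unfolding I_iff by auto

lemma k_I: "wmin = ereal (real_of_int k) \<Longrightarrow> k \<in> I"
  using wmin wmax unfolding I_iff by auto

lemma Bplus:
  assumes "ereal c < ts"
  shows "\<exists>C. \<forall>z\<in>I. 0 \<le> z \<longrightarrow> p c z \<le> C"
proof (cases "wmax = \<infinity>")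
  case False
  then obtain K where K: "wmax = ereal (real_of_int K)" using wmax by auto
  have "p c z \<le> (\<Sum>y\<in>{0..K}. p c y)" if "z \<in> I" "0 \<le> z" for z
  proof (rule member_le_sum)
    show "z \<in> {0..K}" using that K unfolding I_iff by auto
    fix y assume "y \<in> {0..K} - {z}"
    hence "y \<in> I" using I_between[OF zero_I K_I[OF K]] by auto
    thus "0 \<le> p c y" using p_pos by (simp add: less_imp_le)
  qed simp
  thus ?thesis by blast
next
  case True
  obtain N where N: "\<And>n. n \<ge> N \<Longrightarrow> exp c < f (int n)" using ts_eventually[OF True assms] by blast
  have mono: "p c (int N + int m) \<le> p c (int N)" for m
  proof (induction m)
    case 0 thus ?case by simp
  next
    case (Suc m)
    define z where "z = int N + int m"
    have zI: "z \<in> I" "z + 1 \<in> I" unfolding z_def using I_up[OF True] by auto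
    have fz: "exp c < f (z + 1)" using N[of "N + Suc m"] unfolding z_def by (simp add: ac_simps)
    have fpos: "0 < f (z + 1)" using fz exp_gt_zero[of c] by linarith
    have q1: "exp c / f (z + 1) \<le> 1" using fz fpos by simp
    have "p c (z + 1) = p c z * (exp c / f (z + 1))" using p_step[OF zI] by simp
    also have "\<dots> \<le> p c z * 1"
      using q1 p_nonneg[OF zI(1), of c] by (intro mult_left_mono) auto
    finally have "p c (z + 1) \<le> p c z" by simp
    moreover have e: "int N + int (Suc m) = z + 1" by (simp add: z_def)
    ultimately show ?case unfolding e using Suc.IH[folded z_def] by linarith
  qed
  have "p c z \<le> (\<Sum>y\<in>{0..int N}. p c y)" if "z \<in> I" "0 \<le> z" for z
  proof -
    have nn: "0 \<le> p c y" if "0 \<le> y" for y using p_pos[OF I_up[OF True that]] by (simp add: less_imp_le)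
    have mem: "p c y \<le> (\<Sum>y\<in>{0..int N}. p c y)" if "y \<in> {0..int N}" for y
      by (rule member_le_sum) (use that nn in auto)
    show ?thesis
    proof (cases "z \<le> int N")
      case True thus ?thesis using mem that by simp
    next
      case False
      hence "p c z \<le> p c (int N)" using mono[of "nat (z - int N)"] by simp
      also have "\<dots> \<le> (\<Sum>y\<in>{0..int N}. p c y)" by (rule mem) simp
      finally show ?thesis .
    qed
  qed
  thus ?thesis by blast
qed

lemma Bminus:
  assumes "ti < ereal c"
  shows "\<exists>C. \<forall>z\<in>I. z \<le> 0 \<longrightarrow> p c z \<le> C"
proof (cases "wmin = -\<infinity>")
  case False
  then obtain k where k: "wmin = ereal (real_of_int k)" using wmin by auto
  have "p c z \<le> (\<Sum>y\<in>{k..0}. p c y)" if "z \<in> I" "z \<le> 0" for z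
  proof (rule member_le_sum)
    show "z \<in> {k..0}" using that k unfolding I_iff by auto
    fix y assume "y \<in> {k..0} - {z}"
    hence "y \<in> I" using I_between[OF k_I[OF k] zero_I] by auto
    thus "0 \<le> p c y" using p_pos by (simp add: less_imp_le)
  qed simp
  thus ?thesis by blast
next
  case True
  obtain N where N: "\<And>n. n \<ge> N \<Longrightarrow> f (- int n) < exp c" using ti_eventually[OF True assms] by blast
  have mono: "p c (- int N - int m) \<le> p c (- int N)" for m
  proof (induction m)
    case 0 thus ?case by simp
  next
    case (Suc m)
    define z where "z = - int N - int m - 1"
    have zI: "z \<in> I" "z + 1 \<in> I" unfolding z_def using I_down[OF True] by auto
    have fz: "f (z + 1) < exp c" using N[of "N + m"] unfolding z_def by (simp add: algebra_simps)
    have fpos: "0 < f (z + 1)" using f_pos_I[OF zI(2)] True by simp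
    have "p c (z + 1) = p c z * exp c / f (z + 1)" using p_step[OF zI] by simp
    hence "p c z = p c (z + 1) * (f (z + 1) / exp c)" using fpos by (simp add: field_simps)
    also have "\<dots> \<le> p c (z + 1) * 1"
      using fz fpos p_pos[OF zI(2), of c] by (intro mult_left_mono) auto
    finally have "p c z \<le> p c (z + 1)" by simp
    thus ?case using Suc unfolding z_def by (simp add: algebra_simps)
  qed
  have "p c z \<le> (\<Sum>y\<in>{- int N..0}. p c y)" if "z \<in> I" "z \<le> 0" for z
  proof -
    have nn: "0 \<le> p c y" if "y \<le> 0" for y using p_pos[OF I_down[OF True that]] by (simp add: less_imp_le)
    have mem: "p c y \<le> (\<Sum>y\<in>{- int N..0}. p c y)" if "y \<in> {- int N..0}" for y
      by (rule member_le_sum) (use that nn in auto)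
    show ?thesis
    proof (cases "- int N \<le> z")
      case True thus ?thesis using mem that by simp
    next
      case False
      hence "p c z \<le> p c (- int N)" using mono[of "nat (- int N - z)"] by simp
      also have "\<dots> \<le> (\<Sum>y\<in>{- int N..0}. p c y)" by (rule mem) simp
      finally show ?thesis .
    qed
  qed
  thus ?thesis by blast
qed

lemma summable_main:
  assumes "U \<theta>"
  shows "(\<lambda>z. (1 + (real_of_int z)\<^sup>2) ^ k * p \<theta> z) summable_on I"
proof -
  obtain c0 c1 where c: "U c0" "U c1" "c0 < \<theta>" "\<theta> < c1" using U_dense[OF assms] by blast
  obtain C1 where C1: "\<And>z. z \<in> I \<Longrightarrow> 0 \<le> z \<Longrightarrow> p c1 z \<le> C1" using Bplus[of c1] c(2) unfolding U_def by blast
  obtain C2 where C2: "\<And>z. z \<in> I \<Longrightarrow> z \<le> 0 \<Longrightarrow> p c0 z \<le> C2" using Bminus[of c0] c(1) unfolding U_def by blast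
  have C1p: "0 \<le> C1" using C1[of 0] p_pos[of 0 c1] by simp
  have C2p: "0 \<le> C2" using C2[of 0] p_pos[of 0 c0] by simp
  define \<epsilon> where "\<epsilon> = min (c1 - \<theta>) (\<theta> - c0)"
  have ep: "\<epsilon> > 0" unfolding \<epsilon>_def using c by simp
  have bound: "p \<theta> z \<le> (C1 + C2) * exp (- \<epsilon> * \<bar>real_of_int z\<bar>)" if "z \<in> I" for z
  proof (cases "0 \<le> z")
    case True
    have az: "\<bar>real_of_int z\<bar> = real_of_int z" using True by simp
    have "p \<theta> z = p c1 z * exp (- (c1 - \<theta>) * real_of_int z)"
      unfolding p_def by (simp add: exp_add[symmetric] algebra_simps)
    also have "\<dots> \<le> C1 * exp (- \<epsilon> * \<bar>real_of_int z\<bar>)"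
    proof (rule mult_mono)
      show "p c1 z \<le> C1" using C1 that True by simp
      have "\<epsilon> * real_of_int z \<le> (c1 - \<theta>) * real_of_int z"
        using True by (intro mult_right_mono) (auto simp: \<epsilon>_def)
      moreover have "- (c1 - \<theta>) * real_of_int z = - ((c1 - \<theta>) * real_of_int z)" by (simp add: algebra_simps)
      moreover have "- \<epsilon> * \<bar>real_of_int z\<bar> = - (\<epsilon> * real_of_int z)" unfolding az by simp
      ultimately have "- (c1 - \<theta>) * real_of_int z \<le> - \<epsilon> * \<bar>real_of_int z\<bar>" by linarith
      thus "exp (- (c1 - \<theta>) * real_of_int z) \<le> exp (- \<epsilon> * \<bar>real_of_int z\<bar>)" by simp
    qed (use C1p in auto)
    also have "\<dots> \<le> (C1 + C2) * exp (- \<epsilon> * \<bar>real_of_int z\<bar>)"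
      using C2p by (intro mult_right_mono) auto
    finally show ?thesis .
  next
    case False
    have "p \<theta> z = p c0 z * exp ((\<theta> - c0) * real_of_int z)"
      unfolding p_def by (simp add: exp_add[symmetric] algebra_simps)
    also have "\<dots> \<le> C2 * exp (- \<epsilon> * \<bar>real_of_int z\<bar>)"
    proof (rule mult_mono)
      show "p c0 z \<le> C2" using C2 that False by simp
      have "(\<theta> - c0) * real_of_int z \<le> \<epsilon> * real_of_int z"
        using False by (intro mult_right_mono_neg) (auto simp: \<epsilon>_def)
      moreover have "- \<epsilon> * \<bar>real_of_int z\<bar> = \<epsilon> * real_of_int z" using False by simp
      ultimately have "(\<theta> - c0) * real_of_int z \<le> - \<epsilon> * \<bar>real_of_int z\<bar>" by linarith
      thus "exp ((\<theta> - c0) * real_of_int z) \<le> exp (- \<epsilon> * \<bar>real_of_int z\<bar>)" by simp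
    qed (use C2p in auto)
    also have "\<dots> \<le> (C1 + C2) * exp (- \<epsilon> * \<bar>real_of_int z\<bar>)"
      using C1p by (intro mult_right_mono) auto
    finally show ?thesis .
  qed
  have "(\<lambda>z. (C1 + C2) * ((1 + (real_of_int z)\<^sup>2) ^ k * exp (- \<epsilon> * \<bar>real_of_int z\<bar>))) summable_on UNIV"
    by (intro summable_on_cmult_right poly_exp_int_summable ep)
  hence "(\<lambda>z. (C1 + C2) * ((1 + (real_of_int z)\<^sup>2) ^ k * exp (- \<epsilon> * \<bar>real_of_int z\<bar>))) summable_on I"
    by (rule summable_on_subset) simp
  thus ?thesis
  proof (rule summable_on_comparison_test)
    fix z assume z: "z \<in> I"
    have "(1 + (real_of_int z)\<^sup>2) ^ k * p \<theta> z \<le> (1 + (real_of_int z)\<^sup>2) ^ k * ((C1 + C2) * exp (- \<epsilon> * \<bar>real_of_int z\<bar>))"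
      by (intro mult_left_mono bound z) simp
    thus "(1 + (real_of_int z)\<^sup>2) ^ k * p \<theta> z \<le> (C1 + C2) * ((1 + (real_of_int z)\<^sup>2) ^ k * exp (- \<epsilon> * \<bar>real_of_int z\<bar>))"
      by (simp add: algebra_simps)
    show "0 \<le> (1 + (real_of_int z)\<^sup>2) ^ k * p \<theta> z" using p_nonneg[OF z, of \<theta>] by simp
  qed
qed

lemma summable_pbd:
  assumes "U \<theta>" "pbd g"
  shows "(\<lambda>z. g z * p \<theta> z) summable_on I"
proof -
  obtain C k where Ck: "\<And>z. \<bar>g z\<bar> \<le> C * (1 + (real_of_int z)\<^sup>2) ^ k" using assms(2) unfolding pbd_def by blast
  have "(\<lambda>z. C * ((1 + (real_of_int z)\<^sup>2) ^ k * p \<theta> z)) summable_on I"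
    by (intro summable_on_cmult_right summable_main assms(1))
  hence "(\<lambda>z. norm (g z * p \<theta> z)) summable_on I"
  proof (rule summable_on_comparison_test)
    fix z assume z: "z \<in> I"
    have "norm (g z * p \<theta> z) = \<bar>g z\<bar> * p \<theta> z" using p_pos[OF z, of \<theta>] by (simp add: abs_mult)
    also have "\<dots> \<le> C * (1 + (real_of_int z)\<^sup>2) ^ k * p \<theta> z"
      using p_nonneg[OF z, of \<theta>] Ck[of z] by (intro mult_right_mono) auto
    finally show "norm (g z * p \<theta> z) \<le> C * ((1 + (real_of_int z)\<^sup>2) ^ k * p \<theta> z)" by (simp add: mult.assoc)
  qed simp
  thus ?thesis by (rule abs_summable_summable)
qed

definition Gs :: "(int \<Rightarrow> real) \<Rightarrow> real \<Rightarrow> real" where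
  "Gs g \<theta> = (\<Sum>\<^sub>\<infinity>z\<in>I. g z * p \<theta> z)"

definition Zs :: "real \<Rightarrow> real" where "Zs \<theta> = Gs (\<lambda>_. 1) \<theta>"

definition E :: "(int \<Rightarrow> real) \<Rightarrow> real \<Rightarrow> real" where "E g \<theta> = Gs g \<theta> / Zs \<theta>"

lemma Gs_add:
  assumes "U \<theta>" "pbd g" "pbd h"
  shows "Gs (\<lambda>z. g z + h z) \<theta> = Gs g \<theta> + Gs h \<theta>"
  unfolding Gs_def distrib_right by (intro infsum_add summable_pbd assms)

lemma Gs_cmult: "Gs (\<lambda>z. c * g z) \<theta> = c * Gs g \<theta>"
  unfolding Gs_def by (simp add: mult.assoc infsum_cmult_right')

lemma Gs_nonneg: assumes "\<And>z. z \<in> I \<Longrightarrow> 0 \<le> g z" shows "0 \<le> Gs g \<theta>"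
  unfolding Gs_def by (intro infsum_nonneg mult_nonneg_nonneg assms) (auto simp: p_nonneg)

lemma Gs_pos:
  assumes "U \<theta>" "pbd g" "\<And>z. z \<in> I \<Longrightarrow> 0 \<le> g z" "x \<in> I" "0 < g x"
  shows "0 < Gs g \<theta>"
proof -
  have "sum (\<lambda>z. g z * p \<theta> z) {x} \<le> Gs g \<theta>"
    unfolding Gs_def
  proof (rule finite_sum_le_infsum)
    show "(\<lambda>z. g z * p \<theta> z) summable_on I" using summable_pbd assms by blast
    show "0 \<le> g z * p \<theta> z" if "z \<in> I - {x}" for z
      using that assms(3)[of z] p_nonneg[of z \<theta>] by simp
  qed (use assms in auto)
  moreover have "0 < g x * p \<theta> x" by (intro mult_pos_pos) (use assms p_pos in auto)
  ultimately show ?thesis by simp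
qed

lemma Zs_pos: "U \<theta> \<Longrightarrow> 0 < Zs \<theta>"
  unfolding Zs_def by (rule Gs_pos[of _ _ 0]) auto

lemma E_add: "U \<theta> \<Longrightarrow> pbd g \<Longrightarrow> pbd h \<Longrightarrow> E (\<lambda>z. g z + h z) \<theta> = E g \<theta> + E h \<theta>"
  unfolding E_def by (simp add: Gs_add add_divide_distrib)

lemma E_cmult: "E (\<lambda>z. c * g z) \<theta> = c * E g \<theta>"
  unfolding E_def by (simp add: Gs_cmult)

lemma E_const: "U \<theta> \<Longrightarrow> E (\<lambda>z. c) \<theta> = c"
  using Gs_cmult[of c "\<lambda>_. 1" \<theta>] Zs_pos[of \<theta>] unfolding E_def Zs_def by simp

lemma E_nonneg: "U \<theta> \<Longrightarrow> (\<And>z. z \<in> I \<Longrightarrow> 0 \<le> g z) \<Longrightarrow> 0 \<le> E g \<theta>"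
  unfolding E_def using Gs_nonneg Zs_pos by (simp add: less_imp_le)

lemma E_cong: "(\<And>z. z \<in> I \<Longrightarrow> g z = h z) \<Longrightarrow> E g \<theta> = E h \<theta>"
  unfolding E_def Gs_def by (simp cong: infsum_cong)

lemma Gs_deriv:
  assumes U: "U \<theta>" and g: "pbd g"
  shows "((\<lambda>t. Gs g t) has_real_derivative Gs (\<lambda>z. real_of_int z * g z) \<theta>) (at \<theta>)"
proof -
  obtain c0 c1 where c: "U c0" "U c1" "c0 < \<theta>" "\<theta> < c1" using U_dense[OF U] by blast
  define \<delta> where "\<delta> = min (c1 - \<theta>) (\<theta> - c0)"
  have dp: "\<delta> > 0" unfolding \<delta>_def using c by simp
  have Ut: "U t" if "\<bar>t - \<theta>\<bar> \<le> \<delta>" for t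
    by (rule U_between[OF c(1) c(2)]) (use that in \<open>auto simp: \<delta>_def\<close>)
  define c where "c z = (if z \<in> I then g z / ffact f z else 0)" for z
  have ce: "c z * exp (t * real_of_int z) = (if z \<in> I then g z * p t z else 0)" for t z
    unfolding c_def p_def by simp
  have ce2: "\<bar>real_of_int z * c z\<bar> * exp (t * real_of_int z) = (if z \<in> I then \<bar>real_of_int z * g z\<bar> * p t z else 0)" for t z
  proof (cases "z \<in> I")
    case True
    have F: "ffact f z > 0" using ffact_pos[OF True] .
    have "\<bar>real_of_int z * (g z / ffact f z)\<bar> = \<bar>real_of_int z * g z\<bar> / ffact f z"
      using F by (simp add: abs_mult abs_divide)
    thus ?thesis unfolding c_def p_def using True by simp
  qed (simp add: c_def)
  have ce3: "real_of_int z * c z * exp (t * real_of_int z) = (if z \<in> I then real_of_int z * g z * p t z else 0)" for t z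
    unfolding c_def p_def by simp
  have ext: "(\<lambda>z. if z \<in> I then h z else 0) summable_on UNIV" if "h summable_on I" for h :: "int \<Rightarrow> real"
  proof -
    have "(\<lambda>z. if z \<in> I then h z else 0) summable_on UNIV \<longleftrightarrow> h summable_on I"
      by (rule summable_on_cong_neutral) auto
    thus ?thesis using that by simp
  qed
  have exti: "(\<Sum>\<^sub>\<infinity>z. if z \<in> I then h z else 0) = (\<Sum>\<^sub>\<infinity>z\<in>I. h z)" for h :: "int \<Rightarrow> real"
    by (rule infsum_cong_neutral) auto
  have pg: "pbd (\<lambda>z. \<bar>real_of_int z * g z\<bar>)" using g by simp
  have s1: "(\<lambda>z. \<bar>real_of_int z * c z\<bar> * exp ((\<theta> - \<delta>) * real_of_int z)) summable_on UNIV"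
    unfolding ce2 by (intro ext summable_pbd pg Ut) (use dp in simp)
  have s2: "(\<lambda>z. \<bar>real_of_int z * c z\<bar> * exp ((\<theta> + \<delta>) * real_of_int z)) summable_on UNIV"
    unfolding ce2 by (intro ext summable_pbd pg Ut) (use dp in simp)
  have s0: "(\<lambda>z. c z * exp (t * real_of_int z)) summable_on UNIV" if "\<bar>t - \<theta>\<bar> \<le> \<delta>" for t
    unfolding ce by (intro ext summable_pbd g Ut that)
  from deriv_int_exp_series[OF dp s1 s2 s0]
  have D: "((\<lambda>t. \<Sum>\<^sub>\<infinity>z. c z * exp (t * real_of_int z)) has_real_derivative
            (\<Sum>\<^sub>\<infinity>z. real_of_int z * c z * exp (\<theta> * real_of_int z))) (at \<theta>)" .
  have e1: "(\<lambda>t. \<Sum>\<^sub>\<infinity>z. c z * exp (t * real_of_int z)) = (\<lambda>t. Gs g t)"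
    unfolding ce exti Gs_def by simp
  have e2: "(\<Sum>\<^sub>\<infinity>z. real_of_int z * c z * exp (\<theta> * real_of_int z)) = Gs (\<lambda>z. real_of_int z * g z) \<theta>"
    unfolding ce3 exti Gs_def by simp
  show ?thesis using D unfolding e1 e2 .
qed

lemma E_deriv:
  assumes U: "U \<theta>" and g: "pbd g"
  shows "((\<lambda>t. E g t) has_real_derivative (E (\<lambda>z. real_of_int z * g z) \<theta> - E (\<lambda>z. real_of_int z) \<theta> * E g \<theta>)) (at \<theta>)"
proof -
  have Z: "Zs \<theta> \<noteq> 0" using Zs_pos[OF U] by simp
  have D1: "((\<lambda>t. Gs g t) has_real_derivative Gs (\<lambda>z. real_of_int z * g z) \<theta>) (at \<theta>)" by (rule Gs_deriv[OF U g])
  have D2: "((\<lambda>t. Zs t) has_real_derivative Gs (\<lambda>z. real_of_int z) \<theta>) (at \<theta>)"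
    using Gs_deriv[OF U pbd_const[of 1]] unfolding Zs_def by simp
  have D: "((\<lambda>t. Gs g t / Zs t) has_real_derivative
      (Gs (\<lambda>z. real_of_int z * g z) \<theta> * Zs \<theta> - Gs g \<theta> * Gs (\<lambda>z. real_of_int z) \<theta>) / (Zs \<theta> * Zs \<theta>)) (at \<theta>)"
    by (rule DERIV_divide[OF D1 D2 Z])
  have "(Gs (\<lambda>z. real_of_int z * g z) \<theta> * Zs \<theta> - Gs g \<theta> * Gs (\<lambda>z. real_of_int z) \<theta>) / (Zs \<theta> * Zs \<theta>)
      = E (\<lambda>z. real_of_int z * g z) \<theta> - E (\<lambda>z. real_of_int z) \<theta> * E g \<theta>"
    unfolding E_def using Z by (simp add: field_simps)
  moreover have eqf: "(\<lambda>t. Gs g t / Zs t) = (\<lambda>t. E g t)" by (simp add: E_def[abs_def])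
  ultimately show ?thesis using D by simp
qed

lemma mu_theta_eq: "mu_theta wmin wmax f \<theta> z = p \<theta> z / Zs \<theta>"
proof -
  have "Zpart wmin wmax f \<theta> = Zs \<theta>" unfolding Zpart_def Zs_def Gs_def p_def by simp
  thus ?thesis unfolding mu_theta_def p_def by simp
qed

lemma mean_eq: "mean_theta wmin wmax f \<theta> = E (\<lambda>z. real_of_int z) \<theta>"
proof -
  have "(\<lambda>z. real_of_int z * mu_theta wmin wmax f \<theta> z) = (\<lambda>z. (1 / Zs \<theta>) * (real_of_int z * p \<theta> z))"
    unfolding mu_theta_eq by auto
  hence "mean_theta wmin wmax f \<theta> = (\<Sum>\<^sub>\<infinity>z\<in>I. (1 / Zs \<theta>) * (real_of_int z * p \<theta> z))"
    unfolding mean_theta_def by simp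
  also have "\<dots> = E (\<lambda>z. real_of_int z) \<theta>"
    unfolding E_def Gs_def by (simp only: infsum_cmult_right') simp
  finally show ?thesis .
qed

definition V :: "real \<Rightarrow> real" where
  "V \<theta> = E (\<lambda>z. real_of_int z * real_of_int z) \<theta> - E (\<lambda>z. real_of_int z) \<theta> * E (\<lambda>z. real_of_int z) \<theta>"

lemma V_eq:
  assumes U: "U \<theta>"
  shows "E (\<lambda>z. (real_of_int z - m) * (real_of_int z - m)) \<theta>
        = E (\<lambda>z. real_of_int z * real_of_int z) \<theta> - 2 * m * E (\<lambda>z. real_of_int z) \<theta> + m * m"
proof -
  have "(\<lambda>z. (real_of_int z - m) * (real_of_int z - m))
     = (\<lambda>z. real_of_int z * real_of_int z + ((- 2 * m) * real_of_int z + m * m))"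
    by (auto simp: algebra_simps)
  have e1: "E (\<lambda>z. real_of_int z * real_of_int z + ((- 2 * m) * real_of_int z + m * m)) \<theta>
     = E (\<lambda>z. real_of_int z * real_of_int z) \<theta> + E (\<lambda>z. (- 2 * m) * real_of_int z + m * m) \<theta>"
    by (rule E_add[OF U]) simp_all
  have e2: "E (\<lambda>z. (- 2 * m) * real_of_int z + m * m) \<theta> = E (\<lambda>z. (- 2 * m) * real_of_int z) \<theta> + E (\<lambda>z. m * m) \<theta>"
    by (rule E_add[OF U]) simp_all
  have e3: "E (\<lambda>z. (- 2 * m) * real_of_int z) \<theta> = (- 2 * m) * E (\<lambda>z. real_of_int z) \<theta>" by (rule E_cmult)
  have e4: "E (\<lambda>z. m * m) \<theta> = m * m" by (rule E_const[OF U])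
  have "E (\<lambda>z. (real_of_int z - m) * (real_of_int z - m)) \<theta>
      = E (\<lambda>z. real_of_int z * real_of_int z + ((- 2 * m) * real_of_int z + m * m)) \<theta>"
    using \<open>(\<lambda>z. _) = _\<close> by simp
  also have "\<dots> = E (\<lambda>z. real_of_int z * real_of_int z) \<theta> - 2 * m * E (\<lambda>z. real_of_int z) \<theta> + m * m"
    unfolding e1 e2 e3 e4 by simp
  finally show ?thesis .
qed

lemma V_pos:
  assumes U: "U \<theta>"
  shows "0 < V \<theta>"
proof -
  define m where "m = E (\<lambda>z. real_of_int z) \<theta>"
  define g where "g z = (real_of_int z - m) * (real_of_int z - m)" for z
  have pg: "pbd g" unfolding g_def by simp
  have "sum (\<lambda>z. g z * p \<theta> z) {0, 1} \<le> Gs g \<theta>"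
    unfolding Gs_def
  proof (rule finite_sum_le_infsum)
    show "(\<lambda>z. g z * p \<theta> z) summable_on I" using summable_pbd U pg by blast
    show "0 \<le> g z * p \<theta> z" if "z \<in> I - {0, 1}" for z
      using that p_nonneg[of z \<theta>] unfolding g_def by simp
  qed auto
  moreover have "0 < sum (\<lambda>z. g z * p \<theta> z) {0, 1}"
  proof (cases "m = 0")
    case True thus ?thesis unfolding g_def using p_pos[of 0 \<theta>] p_pos[of 1 \<theta>] by (simp add: add_nonneg_pos)
  next
    case False
    have a: "0 < m * m" using False by (simp add: zero_less_mult_iff) linarith
    have b: "0 \<le> (1 - m) * (1 - m)" by simp
    have c1: "0 < m * m * p \<theta> 0" using a p_pos[of 0 \<theta>] by simp
    have c2: "0 \<le> (1 - m) * (1 - m) * p \<theta> 1" using b p_nonneg[of 1 \<theta>] by simp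
    have "0 < m * m * p \<theta> 0 + (1 - m) * (1 - m) * p \<theta> 1"
      using c1 c2 by linarith
    thus ?thesis unfolding g_def by simp
  qed
  ultimately have "0 < E g \<theta>" unfolding E_def using Zs_pos[OF U] by simp
  also have "E g \<theta> = V \<theta>" unfolding g_def V_eq[OF U] V_def m_def by simp
  finally show ?thesis .
qed

lemma mean_deriv:
  assumes "U \<theta>"
  shows "((\<lambda>t. E (\<lambda>z. real_of_int z) t) has_real_derivative V \<theta>) (at \<theta>)"
  using E_deriv[OF assms pbd_id] unfolding V_def .

lemma mean_strict_mono:
  assumes "U a" "U b" "a < b"
  shows "E (\<lambda>z. real_of_int z) a < E (\<lambda>z. real_of_int z) b"
proof (rule DERIV_pos_imp_increasing[OF assms(3)])
  fix x assume "a \<le> x" "x \<le> b"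
  hence "U x" by (intro U_between[OF assms(1,2)])
  thus "\<exists>y. ((\<lambda>t. E (\<lambda>z. real_of_int z) t) has_real_derivative y) (at x) \<and> 0 < y"
    using mean_deriv[OF \<open>U x\<close>] V_pos[OF \<open>U x\<close>] by blast
qed

lemma mean_cont:
  assumes "U a" "U b"
  shows "continuous_on {a..b} (\<lambda>t. E (\<lambda>z. real_of_int z) t)"
proof (rule DERIV_continuous_on)
  fix x assume "x \<in> {a..b}"
  hence "U x" by (intro U_between[OF assms(1,2)]) auto
  thus "((\<lambda>t. E (\<lambda>z. real_of_int z) t) has_real_derivative V x) (at x within {a..b})"
    using has_field_derivative_at_within[OF mean_deriv[OF \<open>U x\<close>]] by simp
qed

end

context zrp
begin

lemma neg_le_abs_mult: "0 \<le> (b::real) \<Longrightarrow> - (a * b) \<le> \<bar>a\<bar> * b"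
proof -
  assume b: "0 \<le> b"
  have "- (a * b) = (- a) * b" by simp
  also have "\<dots> \<le> \<bar>a\<bar> * b" by (rule mult_right_mono) (use b in auto)
  finally show ?thesis .
qed

lemma summable_sub: "U \<theta> \<Longrightarrow> pbd h \<Longrightarrow> S \<subseteq> I \<Longrightarrow> (\<lambda>z. h z * p \<theta> z) summable_on S"
  using summable_on_subset[OF summable_pbd] by blast

lemma Gs_split:
  assumes "U \<theta>" "pbd h"
  shows "Gs h \<theta> = (\<Sum>\<^sub>\<infinity>z\<in>{z\<in>I. P z}. h z * p \<theta> z) + (\<Sum>\<^sub>\<infinity>z\<in>{z\<in>I. \<not> P z}. h z * p \<theta> z)"
proof -
  have "I = {z\<in>I. P z} \<union> {z\<in>I. \<not> P z}" by auto
  hence "Gs h \<theta> = (\<Sum>\<^sub>\<infinity>z\<in>{z\<in>I. P z} \<union> {z\<in>I. \<not> P z}. h z * p \<theta> z)" unfolding Gs_def by simp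
  also have "\<dots> = (\<Sum>\<^sub>\<infinity>z\<in>{z\<in>I. P z}. h z * p \<theta> z) + (\<Sum>\<^sub>\<infinity>z\<in>{z\<in>I. \<not> P z}. h z * p \<theta> z)"
    by (intro infsum_Un_disjoint summable_sub assms) auto
  finally show ?thesis .
qed

lemma p_shift: "p \<theta> z = p \<theta>0 z * exp ((\<theta> - \<theta>0) * real_of_int z)"
  unfolding p_def by (simp add: mult_exp_exp algebra_simps)

lemma p_s_ge1_plus:
  assumes "wmax = \<infinity>" "ts = ereal s" "0 \<le> z"
  shows "1 \<le> p s z"
proof -
  have zI: "z \<in> I" using I_up[OF assms(1,3)] .
  have "(\<Prod>y\<in>{1..z}. f y) \<le> (\<Prod>y\<in>{1..z}. exp s)"
  proof (rule prod_mono)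
    fix y assume y: "y \<in> {1..z}"
    have "y \<in> I" using I_up[OF assms(1)] y by simp
    hence "0 < f y" using f_pos_I gt_wmin1 y by simp
    thus "0 \<le> f y \<and> f y \<le> exp s" using ts_bound[OF assms(1,2)] y by simp
  qed
  also have "(\<Prod>y\<in>{1..z}. exp s) = exp (s * real_of_int z)"
    using assms(3) by (simp add: exp_of_nat_mult[symmetric] mult.commute)
  finally have le: "ffact f z \<le> exp (s * real_of_int z)" unfolding ffact_def using assms(3) by simp
  show ?thesis unfolding p_def using le ffact_pos[OF zI] by simp
qed

lemma p_s_ge1_minus:
  assumes "wmin = -\<infinity>" "ti = ereal s" "z \<le> 0"
  shows "1 \<le> p s z"
proof (cases "z = 0")
  case True thus ?thesis unfolding p_def ffact_def by simp
next
  case False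
  hence zn: "z < 0" using assms(3) by simp
  have "(\<Prod>y\<in>{z+1..0}. exp s) \<le> (\<Prod>y\<in>{z+1..0}. f y)"
  proof (rule prod_mono)
    fix y assume y: "y \<in> {z+1..0}"
    thus "0 \<le> exp s \<and> exp s \<le> f y" using ti_bound[OF assms(1,2)] y by simp
  qed
  moreover have "(\<Prod>y\<in>{z+1..0}. exp s) = exp (- s * real_of_int z)"
    using zn by (simp add: exp_of_nat_mult[symmetric] mult.commute)
  ultimately have le: "exp (- s * real_of_int z) \<le> (\<Prod>y\<in>{z+1..0}. f y)" by simp
  have "p s z = exp (s * real_of_int z) * (\<Prod>y\<in>{z+1..0}. f y)"
    unfolding p_def ffact_def using zn by simp
  also have "\<dots> \<ge> exp (s * real_of_int z) * exp (- s * real_of_int z)"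
    using le by (intro mult_left_mono) auto
  also have "exp (s * real_of_int z) * exp (- s * real_of_int z) = 1"
    by (simp add: mult_exp_exp)
  finally show ?thesis .
qed

lemma E_minus_const:
  assumes "U \<theta>"
  shows "E (\<lambda>z. real_of_int z - \<rho>) \<theta> = E (\<lambda>z. real_of_int z) \<theta> - \<rho>"
proof -
  have "E (\<lambda>z. real_of_int z + (- \<rho>)) \<theta> = E (\<lambda>z. real_of_int z) \<theta> + E (\<lambda>z. - \<rho>) \<theta>"
    by (rule E_add[OF assms]) simp_all
  thus ?thesis using E_const[OF assms] by simp
qed

lemma mean_gt_of_Gs:
  assumes "U \<theta>" "0 < Gs (\<lambda>z. real_of_int z - \<rho>) \<theta>"
  shows "\<rho> < E (\<lambda>z. real_of_int z) \<theta>"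
proof -
  have "0 < E (\<lambda>z. real_of_int z - \<rho>) \<theta>" unfolding E_def using assms Zs_pos by simp
  thus ?thesis using E_minus_const[OF assms(1)] by simp
qed

lemma mean_lt_of_Gs:
  assumes "U \<theta>" "Gs (\<lambda>z. real_of_int z - \<rho>) \<theta> < 0"
  shows "E (\<lambda>z. real_of_int z) \<theta> < \<rho>"
proof -
  have "E (\<lambda>z. real_of_int z - \<rho>) \<theta> < 0" unfolding E_def using assms Zs_pos
    by (simp add: divide_neg_pos)
  thus ?thesis using E_minus_const[OF assms(1)] by simp
qed

lemma Eplus:
  assumes rho: "ereal \<rho> < wmax"
  shows "\<exists>\<theta>. U \<theta> \<and> \<rho> < E (\<lambda>z. real_of_int z) \<theta>"
proof -
  obtain \<theta>0 where U0: "U \<theta>0" using U_exists by blast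
  have pa: "pbd (\<lambda>z. \<bar>real_of_int z - \<rho>\<bar>)" by simp
  consider "ts = \<infinity>" | s where "wmax = \<infinity>" "ts = ereal s" using ts_cases by blast
  then show ?thesis
  proof cases
    case 1
    obtain n where nI: "n \<in> I" and nr: "\<rho> < real_of_int n"
    proof (cases "wmax = \<infinity>")
      case True
      define n where "n = max 1 (\<lfloor>\<rho>\<rfloor> + 1)"
      have "\<rho> < real_of_int n" unfolding n_def by linarith
      moreover have "n \<in> I" using I_up[OF True] unfolding n_def by simp
      ultimately show thesis using that by blast
    next
      case False
      then obtain K where K: "wmax = ereal (real_of_int K)" using wmax by auto
      show thesis by (rule that[of K]) (use K_I[OF K] rho K in auto)
    qed
    define A where "A = {z\<in>I. z < n}"
    define B where "B = {z\<in>I. \<not> z < n}"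
    define C0 where "C0 = (\<Sum>\<^sub>\<infinity>z\<in>A. \<bar>real_of_int z - \<rho>\<bar> * p \<theta>0 z)"
    define q where "q = (real_of_int n - \<rho>) * p \<theta>0 n"
    have qpos: "q > 0" unfolding q_def using nr p_pos[OF nI] by simp
    have sA: "(\<lambda>z. \<bar>real_of_int z - \<rho>\<bar> * p \<theta>0 z) summable_on A"
      by (rule summable_sub[OF U0 pa]) (auto simp: A_def)
    have C0nn: "0 \<le> C0" unfolding C0_def
      by (intro infsum_nonneg mult_nonneg_nonneg) (auto simp: A_def p_nonneg)
    define t where "t = ln (C0 / q + 1)"
    have arg: "1 \<le> C0 / q + 1" using C0nn qpos by simp
    have t0: "0 \<le> t" unfolding t_def using arg by simp
    have et: "exp t = C0 / q + 1" unfolding t_def using arg by simp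
    define \<theta> where "\<theta> = \<theta>0 + t"
    have U\<theta>: "U \<theta>" using U0 1 t0 unfolding U_def \<theta>_def by (auto intro: order.strict_trans2)
    have ps: "p \<theta> z = p \<theta>0 z * exp (t * real_of_int z)" for z
      using p_shift[of \<theta> z \<theta>0] unfolding \<theta>_def by simp
    have sA2: "(\<lambda>z. (real_of_int z - \<rho>) * p \<theta> z) summable_on A"
      by (rule summable_sub[OF U\<theta>]) (auto simp: A_def)
    have bndA: "- (exp (t * (real_of_int n - 1)) * C0) \<le> (\<Sum>\<^sub>\<infinity>z\<in>A. (real_of_int z - \<rho>) * p \<theta> z)"
    proof -
      have "(\<Sum>\<^sub>\<infinity>z\<in>A. - ((real_of_int z - \<rho>) * p \<theta> z))
          \<le> (\<Sum>\<^sub>\<infinity>z\<in>A. exp (t * (real_of_int n - 1)) * (\<bar>real_of_int z - \<rho>\<bar> * p \<theta>0 z))"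
      proof (rule infsum_mono)
        show "(\<lambda>z. - ((real_of_int z - \<rho>) * p \<theta> z)) summable_on A"
          using sA2 by (simp only: summable_on_uminus)
        show "(\<lambda>z. exp (t * (real_of_int n - 1)) * (\<bar>real_of_int z - \<rho>\<bar> * p \<theta>0 z)) summable_on A"
          using sA by (rule summable_on_cmult_right)
        fix z assume z: "z \<in> A"
        hence zI: "z \<in> I" and zn: "real_of_int z \<le> real_of_int n - 1" unfolding A_def by auto
        have "- ((real_of_int z - \<rho>) * p \<theta> z) \<le> \<bar>real_of_int z - \<rho>\<bar> * p \<theta> z"
          by (rule neg_le_abs_mult[OF p_nonneg[OF zI]])
        also have "\<dots> = \<bar>real_of_int z - \<rho>\<bar> * p \<theta>0 z * exp (t * real_of_int z)" unfolding ps by simp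
        also have "\<dots> \<le> \<bar>real_of_int z - \<rho>\<bar> * p \<theta>0 z * exp (t * (real_of_int n - 1))"
          using zn t0 p_nonneg[OF zI, of \<theta>0] by (intro mult_left_mono) (auto intro: mult_left_mono)
        finally show "- ((real_of_int z - \<rho>) * p \<theta> z) \<le> exp (t * (real_of_int n - 1)) * (\<bar>real_of_int z - \<rho>\<bar> * p \<theta>0 z)"
          by (simp add: mult_ac)
      qed
      thus ?thesis unfolding C0_def by (simp add: infsum_uminus infsum_cmult_right')
    qed
    have bndB: "(real_of_int n - \<rho>) * p \<theta> n \<le> (\<Sum>\<^sub>\<infinity>z\<in>B. (real_of_int z - \<rho>) * p \<theta> z)"
    proof -
      have "sum (\<lambda>z. (real_of_int z - \<rho>) * p \<theta> z) {n} \<le> (\<Sum>\<^sub>\<infinity>z\<in>B. (real_of_int z - \<rho>) * p \<theta> z)"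
      proof (rule finite_sum_le_infsum)
        show "(\<lambda>z. (real_of_int z - \<rho>) * p \<theta> z) summable_on B"
          by (rule summable_sub[OF U\<theta>]) (auto simp: B_def)
        show "0 \<le> (real_of_int z - \<rho>) * p \<theta> z" if "z \<in> B - {n}" for z
          using that nr p_nonneg[of z \<theta>] unfolding B_def by (intro mult_nonneg_nonneg) auto
      qed (use nI in \<open>auto simp: B_def\<close>)
      thus ?thesis by simp
    qed
    have G: "Gs (\<lambda>z. real_of_int z - \<rho>) \<theta> = (\<Sum>\<^sub>\<infinity>z\<in>A. (real_of_int z - \<rho>) * p \<theta> z) + (\<Sum>\<^sub>\<infinity>z\<in>B. (real_of_int z - \<rho>) * p \<theta> z)"
      unfolding A_def B_def by (rule Gs_split[OF U\<theta>]) simp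
    have e1: "(real_of_int n - \<rho>) * p \<theta> n = q * exp (t * real_of_int n)" unfolding q_def ps by simp
    have e2: "exp (t * real_of_int n) = exp (t * (real_of_int n - 1)) * exp t"
      by (simp add: mult_exp_exp algebra_simps)
    have e3: "q * exp t - C0 = q" unfolding et using qpos by (simp add: field_simps)
    have "(real_of_int n - \<rho>) * p \<theta> n - exp (t * (real_of_int n - 1)) * C0
        = exp (t * (real_of_int n - 1)) * (q * exp t - C0)" unfolding e1 e2 by (simp add: algebra_simps)
    also have "\<dots> = exp (t * (real_of_int n - 1)) * q" unfolding e3 ..
    also have "\<dots> > 0" using qpos by simp
    finally have "0 < Gs (\<lambda>z. real_of_int z - \<rho>) \<theta>" unfolding G using bndA bndB by linarith
    thus ?thesis using mean_gt_of_Gs[OF U\<theta>] U\<theta> by blast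
  next
    case 2
    note wI = 2(1) and s = 2(2)
    have \<theta>0s: "\<theta>0 < s" using U0 s unfolding U_def by simp
    define n where "n = max 1 (\<lceil>\<rho>\<rceil> + 1)"
    have n1: "1 \<le> n" and nr: "\<rho> + 1 \<le> real_of_int n" unfolding n_def by (simp, linarith)
    define A where "A = {z\<in>I. z < n}"
    define B where "B = {z\<in>I. \<not> z < n}"
    have finsub: "{0..<n} \<subseteq> A" unfolding A_def using I_up[OF wI] by auto
    define C1 where "C1 = (\<Sum>\<^sub>\<infinity>z\<in>A. \<bar>real_of_int z - \<rho>\<bar> * p \<theta>0 z) + (\<Sum>z\<in>{0..<n}. \<bar>real_of_int z - \<rho>\<bar> * p s z)"
    define N where "N = n + int (nat \<lceil>C1\<rceil>)"
    define g where "g \<theta> = (\<Sum>z\<in>{n..N}. p \<theta> z)" for \<theta>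
    have gs: "C1 < g s"
    proof -
      have "(\<Sum>z\<in>{n..N}. (1::real)) \<le> g s" unfolding g_def
        by (rule sum_mono) (use p_s_ge1_plus[OF wI s] n1 in auto)
      moreover have "(\<Sum>z\<in>{n..N}. (1::real)) = real_of_int (N - n + 1)" unfolding N_def by simp
      moreover have "C1 < real_of_int (N - n + 1)" unfolding N_def by linarith
      ultimately show ?thesis by linarith
    qed
    have fI: "ffact f z \<noteq> 0" if "z \<in> {n..N}" for z
    proof -
      have "z \<in> I" using I_up[OF wI] n1 that by auto
      thus ?thesis using ffact_pos by (metis less_irrefl)
    qed
    have cont: "isCont g s" unfolding g_def p_def by (intro continuous_intros) (use fI in auto)
    hence "(g \<longlongrightarrow> g s) (at_left s)" by (simp add: isCont_def filterlim_at_split)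
    hence ev1: "eventually (\<lambda>\<theta>. C1 < g \<theta>) (at_left s)" using gs by (rule order_tendstoD(1))
    have ev2: "eventually (\<lambda>\<theta>. \<theta> \<in> {\<theta>0<..<s}) (at_left s)" by (rule eventually_at_left_real[OF \<theta>0s])
    obtain \<theta> where th: "C1 < g \<theta>" "\<theta>0 < \<theta>" "\<theta> < s"
      using eventually_happens[OF eventually_conj[OF ev1 ev2]] by auto
    have U\<theta>: "U \<theta>" using U0 th s unfolding U_def by (auto intro: order.strict_trans)
    have sA: "(\<lambda>z. \<bar>real_of_int z - \<rho>\<bar> * p \<theta>0 z) summable_on A"
      by (rule summable_sub[OF U0 pa]) (auto simp: A_def)
    have sA2: "(\<lambda>z. (real_of_int z - \<rho>) * p \<theta> z) summable_on A"
      by (rule summable_sub[OF U\<theta>]) (auto simp: A_def)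
    define r where "r z = (if z \<in> {0..<n} then \<bar>real_of_int z - \<rho>\<bar> * p s z else 0)" for z
    have rA: "(\<Sum>\<^sub>\<infinity>z\<in>A. r z) = (\<Sum>z\<in>{0..<n}. \<bar>real_of_int z - \<rho>\<bar> * p s z)"
    proof -
      have "(\<Sum>\<^sub>\<infinity>z\<in>A. r z) = (\<Sum>\<^sub>\<infinity>z\<in>{0..<n}. r z)"
        by (rule infsum_cong_neutral) (use finsub in \<open>auto simp: r_def\<close>)
      also have "\<dots> = (\<Sum>z\<in>{0..<n}. \<bar>real_of_int z - \<rho>\<bar> * p s z)" by (simp add: r_def)
      finally show ?thesis .
    qed
    have sr: "r summable_on A"
    proof -
      have "r summable_on A \<longleftrightarrow> r summable_on {0..<n}"
        by (rule summable_on_cong_neutral) (use finsub in \<open>auto simp: r_def\<close>)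
      thus ?thesis by simp
    qed
    have bndA: "- C1 \<le> (\<Sum>\<^sub>\<infinity>z\<in>A. (real_of_int z - \<rho>) * p \<theta> z)"
    proof -
      have "(\<Sum>\<^sub>\<infinity>z\<in>A. - ((real_of_int z - \<rho>) * p \<theta> z))
          \<le> (\<Sum>\<^sub>\<infinity>z\<in>A. \<bar>real_of_int z - \<rho>\<bar> * p \<theta>0 z + r z)"
      proof (rule infsum_mono)
        show "(\<lambda>z. - ((real_of_int z - \<rho>) * p \<theta> z)) summable_on A"
          using sA2 by (simp only: summable_on_uminus)
        show "(\<lambda>z. \<bar>real_of_int z - \<rho>\<bar> * p \<theta>0 z + r z) summable_on A"
          using sA sr by (rule summable_on_add)
        fix z assume z: "z \<in> A"
        hence zI: "z \<in> I" and zn: "z < n" unfolding A_def by auto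
        have "- ((real_of_int z - \<rho>) * p \<theta> z) \<le> \<bar>real_of_int z - \<rho>\<bar> * p \<theta> z"
          by (rule neg_le_abs_mult[OF p_nonneg[OF zI]])
        also have "p \<theta> z \<le> p \<theta>0 z + (if 0 \<le> z then p s z else 0)"
        proof (cases "0 \<le> z")
          case True
          have "\<theta> * real_of_int z \<le> s * real_of_int z" using True th by (intro mult_right_mono) auto
          hence "p \<theta> z \<le> p s z" unfolding p_def using ffact_pos[OF zI] by (simp add: divide_right_mono)
          thus ?thesis using True p_nonneg[OF zI, of \<theta>0] by simp
        next
          case False
          have "\<theta> * real_of_int z \<le> \<theta>0 * real_of_int z" using False th by (intro mult_right_mono_neg) auto
          hence "p \<theta> z \<le> p \<theta>0 z" unfolding p_def using ffact_pos[OF zI] by (simp add: divide_right_mono)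
          thus ?thesis using False by simp
        qed
        hence "\<bar>real_of_int z - \<rho>\<bar> * p \<theta> z \<le> \<bar>real_of_int z - \<rho>\<bar> * (p \<theta>0 z + (if 0 \<le> z then p s z else 0))"
          by (intro mult_left_mono) auto
        also have "\<dots> = \<bar>real_of_int z - \<rho>\<bar> * p \<theta>0 z + r z" unfolding r_def using zn by (auto simp: algebra_simps)
        finally show "- ((real_of_int z - \<rho>) * p \<theta> z) \<le> \<bar>real_of_int z - \<rho>\<bar> * p \<theta>0 z + r z" .
      qed
      also have "\<dots> = C1" unfolding C1_def rA[symmetric] by (rule infsum_add[OF sA sr])
      finally show ?thesis by (simp add: infsum_uminus)
    qed
    have bndB: "g \<theta> \<le> (\<Sum>\<^sub>\<infinity>z\<in>B. (real_of_int z - \<rho>) * p \<theta> z)"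
    proof -
      have sub: "{n..N} \<subseteq> B" unfolding B_def using I_up[OF wI] n1 by auto
      have "g \<theta> \<le> (\<Sum>z\<in>{n..N}. (real_of_int z - \<rho>) * p \<theta> z)" unfolding g_def
      proof (rule sum_mono)
        fix z assume "z \<in> {n..N}"
        hence zI: "z \<in> I" and "1 \<le> real_of_int z - \<rho>" using sub nr unfolding B_def by auto
        thus "p \<theta> z \<le> (real_of_int z - \<rho>) * p \<theta> z"
          using p_nonneg[OF zI, of \<theta>] mult_right_mono by fastforce
      qed
      also have "\<dots> \<le> (\<Sum>\<^sub>\<infinity>z\<in>B. (real_of_int z - \<rho>) * p \<theta> z)"
      proof (rule finite_sum_le_infsum)
        show "(\<lambda>z. (real_of_int z - \<rho>) * p \<theta> z) summable_on B"
          by (rule summable_sub[OF U\<theta>]) (auto simp: B_def)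
        show "0 \<le> (real_of_int z - \<rho>) * p \<theta> z" if "z \<in> B - {n..N}" for z
          using that nr n1 p_nonneg[of z \<theta>] unfolding B_def by (intro mult_nonneg_nonneg) auto
      qed (use sub in auto)
      finally show ?thesis .
    qed
    have G: "Gs (\<lambda>z. real_of_int z - \<rho>) \<theta> = (\<Sum>\<^sub>\<infinity>z\<in>A. (real_of_int z - \<rho>) * p \<theta> z) + (\<Sum>\<^sub>\<infinity>z\<in>B. (real_of_int z - \<rho>) * p \<theta> z)"
      unfolding A_def B_def by (rule Gs_split[OF U\<theta>]) simp
    have "0 < Gs (\<lambda>z. real_of_int z - \<rho>) \<theta>" unfolding G using bndA bndB th(1) by linarith
    thus ?thesis using mean_gt_of_Gs[OF U\<theta>] U\<theta> by blast
  qed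
qed

lemma Eminus:
  assumes rho: "wmin < ereal \<rho>"
  shows "\<exists>\<theta>. U \<theta> \<and> E (\<lambda>z. real_of_int z) \<theta> < \<rho>"
proof -
  obtain \<theta>0 where U0: "U \<theta>0" using U_exists by blast
  have pa: "pbd (\<lambda>z. \<bar>real_of_int z - \<rho>\<bar>)" by simp
  have le_abs_mult: "a * b \<le> \<bar>a\<bar> * b" if "0 \<le> b" for a b :: real
    using that by (intro mult_right_mono) auto
  consider "ti = -\<infinity>" | s where "wmin = -\<infinity>" "ti = ereal s" using ti_cases by blast
  then show ?thesis
  proof cases
    case 1
    obtain n where nI: "n \<in> I" and nr: "real_of_int n < \<rho>"
    proof (cases "wmin = -\<infinity>")
      case True
      define n where "n = min 0 (\<lceil>\<rho>\<rceil> - 1)"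
      have "real_of_int n < \<rho>" unfolding n_def by linarith
      moreover have "n \<in> I" using I_down[OF True] unfolding n_def by simp
      ultimately show thesis using that by blast
    next
      case False
      then obtain k where k: "wmin = ereal (real_of_int k)" using wmin by auto
      show thesis by (rule that[of k]) (use k_I[OF k] rho k in auto)
    qed
    define A where "A = {z\<in>I. n < z}"
    define B where "B = {z\<in>I. \<not> n < z}"
    define C0 where "C0 = (\<Sum>\<^sub>\<infinity>z\<in>A. \<bar>real_of_int z - \<rho>\<bar> * p \<theta>0 z)"
    define q where "q = (\<rho> - real_of_int n) * p \<theta>0 n"
    have qpos: "q > 0" unfolding q_def using nr p_pos[OF nI] by simp
    have sA: "(\<lambda>z. \<bar>real_of_int z - \<rho>\<bar> * p \<theta>0 z) summable_on A"
      by (rule summable_sub[OF U0 pa]) (auto simp: A_def)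
    have C0nn: "0 \<le> C0" unfolding C0_def
      by (intro infsum_nonneg mult_nonneg_nonneg) (auto simp: A_def p_nonneg)
    define t where "t = ln (C0 / q + 1)"
    have arg: "1 \<le> C0 / q + 1" using C0nn qpos by simp
    have t0: "0 \<le> t" unfolding t_def using arg by simp
    have et: "exp t = C0 / q + 1" unfolding t_def using arg by simp
    define \<theta> where "\<theta> = \<theta>0 - t"
    have h: "ereal (\<theta>0 - t) \<le> ereal \<theta>0" using t0 by simp
    have lt: "ereal (\<theta>0 - t) < ts" using order.strict_trans1[OF h] U0 unfolding U_def by blast
    have U\<theta>: "U \<theta>" unfolding U_def \<theta>_def using lt 1 by simp
    have ps: "p \<theta> z = p \<theta>0 z * exp (- t * real_of_int z)" for z
      using p_shift[of \<theta> z \<theta>0] unfolding \<theta>_def by simp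
    have bndA: "(\<Sum>\<^sub>\<infinity>z\<in>A. (real_of_int z - \<rho>) * p \<theta> z) \<le> exp (- t * (real_of_int n + 1)) * C0"
    proof -
      have "(\<Sum>\<^sub>\<infinity>z\<in>A. (real_of_int z - \<rho>) * p \<theta> z)
          \<le> (\<Sum>\<^sub>\<infinity>z\<in>A. exp (- t * (real_of_int n + 1)) * (\<bar>real_of_int z - \<rho>\<bar> * p \<theta>0 z))"
      proof (rule infsum_mono)
        show "(\<lambda>z. (real_of_int z - \<rho>) * p \<theta> z) summable_on A"
          by (rule summable_sub[OF U\<theta>]) (auto simp: A_def)
        show "(\<lambda>z. exp (- t * (real_of_int n + 1)) * (\<bar>real_of_int z - \<rho>\<bar> * p \<theta>0 z)) summable_on A"
          using sA by (rule summable_on_cmult_right)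
        fix z assume z: "z \<in> A"
        hence zI: "z \<in> I" and zn: "real_of_int n + 1 \<le> real_of_int z" unfolding A_def by auto
        have "(real_of_int z - \<rho>) * p \<theta> z \<le> \<bar>real_of_int z - \<rho>\<bar> * p \<theta> z"
          by (rule le_abs_mult[OF p_nonneg[OF zI]])
        also have "\<dots> = \<bar>real_of_int z - \<rho>\<bar> * p \<theta>0 z * exp (- t * real_of_int z)" unfolding ps by simp
        also have "\<dots> \<le> \<bar>real_of_int z - \<rho>\<bar> * p \<theta>0 z * exp (- t * (real_of_int n + 1))"
        proof (rule mult_left_mono)
          have "t * (real_of_int n + 1) \<le> t * real_of_int z" using zn t0 by (intro mult_left_mono) auto
          thus "exp (- t * real_of_int z) \<le> exp (- t * (real_of_int n + 1))" by simp
        qed (use p_nonneg[OF zI, of \<theta>0] in simp)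
        finally show "(real_of_int z - \<rho>) * p \<theta> z \<le> exp (- t * (real_of_int n + 1)) * (\<bar>real_of_int z - \<rho>\<bar> * p \<theta>0 z)"
          by (simp add: mult_ac)
      qed
      thus ?thesis unfolding C0_def by (simp add: infsum_cmult_right')
    qed
    have bndB: "(\<Sum>\<^sub>\<infinity>z\<in>B. (real_of_int z - \<rho>) * p \<theta> z) \<le> (real_of_int n - \<rho>) * p \<theta> n"
    proof -
      have "sum (\<lambda>z. - ((real_of_int z - \<rho>) * p \<theta> z)) {n} \<le> (\<Sum>\<^sub>\<infinity>z\<in>B. - ((real_of_int z - \<rho>) * p \<theta> z))"
      proof (rule finite_sum_le_infsum)
        have "(\<lambda>z. (real_of_int z - \<rho>) * p \<theta> z) summable_on B"
          by (rule summable_sub[OF U\<theta>]) (auto simp: B_def)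
        thus "(\<lambda>z. - ((real_of_int z - \<rho>) * p \<theta> z)) summable_on B" by (simp only: summable_on_uminus)
        show "0 \<le> - ((real_of_int z - \<rho>) * p \<theta> z)" if "z \<in> B - {n}" for z
        proof -
          have "real_of_int z \<le> real_of_int n" using that unfolding B_def by auto
          hence "0 \<le> (\<rho> - real_of_int z) * p \<theta> z" using nr that p_nonneg[of z \<theta>] unfolding B_def
            by (intro mult_nonneg_nonneg) auto
          thus ?thesis by (simp add: algebra_simps)
        qed
      qed (use nI in \<open>auto simp: B_def\<close>)
      thus ?thesis by (simp add: infsum_uminus)
    qed
    have G: "Gs (\<lambda>z. real_of_int z - \<rho>) \<theta> = (\<Sum>\<^sub>\<infinity>z\<in>A. (real_of_int z - \<rho>) * p \<theta> z) + (\<Sum>\<^sub>\<infinity>z\<in>B. (real_of_int z - \<rho>) * p \<theta> z)"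
      unfolding A_def B_def by (rule Gs_split[OF U\<theta>]) simp
    have e1: "(real_of_int n - \<rho>) * p \<theta> n = - (q * exp (- t * real_of_int n))" unfolding q_def ps by (simp add: algebra_simps)
    have e2: "exp (- t * real_of_int n) = exp (- t * (real_of_int n + 1)) * exp t"
      by (simp add: mult_exp_exp algebra_simps)
    have e3: "C0 - q * exp t = - q" unfolding et using qpos by (simp add: field_simps)
    have "exp (- t * (real_of_int n + 1)) * C0 + (real_of_int n - \<rho>) * p \<theta> n
        = exp (- t * (real_of_int n + 1)) * (C0 - q * exp t)" unfolding e1 e2 by (simp add: algebra_simps)
    also have "\<dots> = - (exp (- t * (real_of_int n + 1)) * q)" unfolding e3 by simp
    also have "\<dots> < 0" using qpos by simp
    finally have "Gs (\<lambda>z. real_of_int z - \<rho>) \<theta> < 0" unfolding G using bndA bndB by linarith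
    thus ?thesis using mean_lt_of_Gs[OF U\<theta>] U\<theta> by blast
  next
    case 2
    note wI = 2(1) and s = 2(2)
    have \<theta>0s: "s < \<theta>0" using U0 s unfolding U_def by simp
    define n where "n = min (-1) (\<lfloor>\<rho>\<rfloor> - 1)"
    have n1: "n \<le> -1" and nr: "real_of_int n \<le> \<rho> - 1" unfolding n_def by (simp, linarith)
    define A where "A = {z\<in>I. n < z}"
    define B where "B = {z\<in>I. \<not> n < z}"
    have finsub: "{n<..0} \<subseteq> A" unfolding A_def using I_down[OF wI] by auto
    define C1 where "C1 = (\<Sum>\<^sub>\<infinity>z\<in>A. \<bar>real_of_int z - \<rho>\<bar> * p \<theta>0 z) + (\<Sum>z\<in>{n<..0}. \<bar>real_of_int z - \<rho>\<bar> * p s z)"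
    define N where "N = n - int (nat \<lceil>C1\<rceil>)"
    define g where "g \<theta> = (\<Sum>z\<in>{N..n}. p \<theta> z)" for \<theta>
    have gs: "C1 < g s"
    proof -
      have "(\<Sum>z\<in>{N..n}. (1::real)) \<le> g s" unfolding g_def
        by (rule sum_mono) (use p_s_ge1_minus[OF wI s] n1 in auto)
      moreover have "(\<Sum>z\<in>{N..n}. (1::real)) = real_of_int (n - N + 1)" unfolding N_def by simp
      moreover have "C1 < real_of_int (n - N + 1)" unfolding N_def by linarith
      ultimately show ?thesis by linarith
    qed
    have fI: "ffact f z \<noteq> 0" if "z \<in> {N..n}" for z
    proof -
      have "z \<in> I" using I_down[OF wI] n1 that by auto
      thus ?thesis using ffact_pos by (metis less_irrefl)
    qed
    have cont: "isCont g s" unfolding g_def p_def by (intro continuous_intros) (use fI in auto)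
    hence "(g \<longlongrightarrow> g s) (at_right s)" by (simp add: isCont_def filterlim_at_split)
    hence ev1: "eventually (\<lambda>\<theta>. C1 < g \<theta>) (at_right s)" using gs by (rule order_tendstoD(1))
    have ev2: "eventually (\<lambda>\<theta>. \<theta> \<in> {s<..<\<theta>0}) (at_right s)" by (rule eventually_at_right_real[OF \<theta>0s])
    obtain \<theta> where th: "C1 < g \<theta>" "s < \<theta>" "\<theta> < \<theta>0"
      using eventually_happens[OF eventually_conj[OF ev1 ev2]] by auto
    have h: "ereal \<theta> < ereal \<theta>0" using th by simp
    have lt: "ereal \<theta> < ts" using order.strict_trans[OF h] U0 unfolding U_def by blast
    have U\<theta>: "U \<theta>" using lt th s unfolding U_def by simp
    have sA: "(\<lambda>z. \<bar>real_of_int z - \<rho>\<bar> * p \<theta>0 z) summable_on A"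
      by (rule summable_sub[OF U0 pa]) (auto simp: A_def)
    define r where "r z = (if z \<in> {n<..0} then \<bar>real_of_int z - \<rho>\<bar> * p s z else 0)" for z
    have rA: "(\<Sum>\<^sub>\<infinity>z\<in>A. r z) = (\<Sum>z\<in>{n<..0}. \<bar>real_of_int z - \<rho>\<bar> * p s z)"
    proof -
      have "(\<Sum>\<^sub>\<infinity>z\<in>A. r z) = (\<Sum>\<^sub>\<infinity>z\<in>{n<..0}. r z)"
        by (rule infsum_cong_neutral) (use finsub in \<open>auto simp: r_def\<close>)
      also have "\<dots> = (\<Sum>z\<in>{n<..0}. \<bar>real_of_int z - \<rho>\<bar> * p s z)" by (simp add: r_def)
      finally show ?thesis .
    qed
    have sr: "r summable_on A"
    proof -
      have "r summable_on A \<longleftrightarrow> r summable_on {n<..0}"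
        by (rule summable_on_cong_neutral) (use finsub in \<open>auto simp: r_def\<close>)
      thus ?thesis by simp
    qed
    have bndA: "(\<Sum>\<^sub>\<infinity>z\<in>A. (real_of_int z - \<rho>) * p \<theta> z) \<le> C1"
    proof -
      have "(\<Sum>\<^sub>\<infinity>z\<in>A. (real_of_int z - \<rho>) * p \<theta> z)
          \<le> (\<Sum>\<^sub>\<infinity>z\<in>A. \<bar>real_of_int z - \<rho>\<bar> * p \<theta>0 z + r z)"
      proof (rule infsum_mono)
        show "(\<lambda>z. (real_of_int z - \<rho>) * p \<theta> z) summable_on A"
          by (rule summable_sub[OF U\<theta>]) (auto simp: A_def)
        show "(\<lambda>z. \<bar>real_of_int z - \<rho>\<bar> * p \<theta>0 z + r z) summable_on A"
          using sA sr by (rule summable_on_add)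
        fix z assume z: "z \<in> A"
        hence zI: "z \<in> I" and zn: "n < z" unfolding A_def by auto
        have "(real_of_int z - \<rho>) * p \<theta> z \<le> \<bar>real_of_int z - \<rho>\<bar> * p \<theta> z"
          by (rule le_abs_mult[OF p_nonneg[OF zI]])
        also have "p \<theta> z \<le> p \<theta>0 z + (if z \<le> 0 then p s z else 0)"
        proof (cases "z \<le> 0")
          case True
          have "\<theta> * real_of_int z \<le> s * real_of_int z" using True th by (intro mult_right_mono_neg) auto
          hence "p \<theta> z \<le> p s z" unfolding p_def using ffact_pos[OF zI] by (simp add: divide_right_mono)
          thus ?thesis using True p_nonneg[OF zI, of \<theta>0] by simp
        next
          case False
          have "\<theta> * real_of_int z \<le> \<theta>0 * real_of_int z" using False th by (intro mult_right_mono) auto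
          hence "p \<theta> z \<le> p \<theta>0 z" unfolding p_def using ffact_pos[OF zI] by (simp add: divide_right_mono)
          thus ?thesis using False by simp
        qed
        hence "\<bar>real_of_int z - \<rho>\<bar> * p \<theta> z \<le> \<bar>real_of_int z - \<rho>\<bar> * (p \<theta>0 z + (if z \<le> 0 then p s z else 0))"
          by (intro mult_left_mono) auto
        also have "\<dots> = \<bar>real_of_int z - \<rho>\<bar> * p \<theta>0 z + r z" unfolding r_def using zn by (auto simp: algebra_simps)
        finally show "(real_of_int z - \<rho>) * p \<theta> z \<le> \<bar>real_of_int z - \<rho>\<bar> * p \<theta>0 z + r z" .
      qed
      also have "\<dots> = C1" unfolding C1_def rA[symmetric] by (rule infsum_add[OF sA sr])
      finally show ?thesis .
    qed
    have bndB: "(\<Sum>\<^sub>\<infinity>z\<in>B. (real_of_int z - \<rho>) * p \<theta> z) \<le> - g \<theta>"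
    proof -
      have sub: "{N..n} \<subseteq> B" unfolding B_def using I_down[OF wI] n1 by auto
      have "g \<theta> \<le> (\<Sum>z\<in>{N..n}. - ((real_of_int z - \<rho>) * p \<theta> z))" unfolding g_def
      proof (rule sum_mono)
        fix z assume "z \<in> {N..n}"
        hence zI: "z \<in> I" and "1 \<le> \<rho> - real_of_int z" using sub nr unfolding B_def by auto
        hence "p \<theta> z \<le> (\<rho> - real_of_int z) * p \<theta> z"
          using p_nonneg[OF zI, of \<theta>] mult_right_mono by fastforce
        thus "p \<theta> z \<le> - ((real_of_int z - \<rho>) * p \<theta> z)" by (simp add: algebra_simps)
      qed
      also have "\<dots> \<le> (\<Sum>\<^sub>\<infinity>z\<in>B. - ((real_of_int z - \<rho>) * p \<theta> z))"
      proof (rule finite_sum_le_infsum)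
        have "(\<lambda>z. (real_of_int z - \<rho>) * p \<theta> z) summable_on B"
          by (rule summable_sub[OF U\<theta>]) (auto simp: B_def)
        thus "(\<lambda>z. - ((real_of_int z - \<rho>) * p \<theta> z)) summable_on B" by (simp only: summable_on_uminus)
        show "0 \<le> - ((real_of_int z - \<rho>) * p \<theta> z)" if "z \<in> B - {N..n}" for z
        proof -
          have "0 \<le> (\<rho> - real_of_int z) * p \<theta> z" using that nr n1 p_nonneg[of z \<theta>] unfolding B_def
            by (intro mult_nonneg_nonneg) auto
          thus ?thesis by (simp add: algebra_simps)
        qed
      qed (use sub in auto)
      finally show ?thesis by (simp add: infsum_uminus)
    qed
    have G: "Gs (\<lambda>z. real_of_int z - \<rho>) \<theta> = (\<Sum>\<^sub>\<infinity>z\<in>A. (real_of_int z - \<rho>) * p \<theta> z) + (\<Sum>\<^sub>\<infinity>z\<in>B. (real_of_int z - \<rho>) * p \<theta> z)"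
      unfolding A_def B_def by (rule Gs_split[OF U\<theta>]) simp
    have "Gs (\<lambda>z. real_of_int z - \<rho>) \<theta> < 0" unfolding G using bndA bndB th(1) by linarith
    thus ?thesis using mean_lt_of_Gs[OF U\<theta>] U\<theta> by blast
  qed
qed

end

lemma quad_factor:
  fixes D \<kappa> m x :: real
  assumes D: "D > 0"
  defines "sq \<equiv> sqrt (\<kappa>\<^sup>2 + 4 * D ^ 3)"
  shows "D * ((x - (m + (\<kappa> - sq) / (2 * D))) * (x - (m + (\<kappa> + sq) / (2 * D))))
         = D * (x - m) * (x - m) - \<kappa> * (x - m) - D * D"
proof -
  have nn: "0 \<le> \<kappa>\<^sup>2 + 4 * D ^ 3" using D by (simp add: add_nonneg_nonneg)
  have sq2: "sq * sq = \<kappa>\<^sup>2 + 4 * D ^ 3" unfolding sq_def using nn by simp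
  define y where "y = x - m"
  have "D * ((x - (m + (\<kappa> - sq) / (2 * D))) * (x - (m + (\<kappa> + sq) / (2 * D))))
      = D * ((y - (\<kappa> - sq) / (2 * D)) * (y - (\<kappa> + sq) / (2 * D)))" unfolding y_def by (simp add: algebra_simps)
  also have "\<dots> = D * y * y - \<kappa> * y + (\<kappa> * \<kappa> - sq * sq) / (4 * D)"
    using D by (simp add: field_simps)
  also have "(\<kappa> * \<kappa> - sq * sq) / (4 * D) = - (D * D)"
    unfolding sq2 using D by (simp add: field_simps power2_eq_square power3_eq_cube)
  finally show ?thesis unfolding y_def by simp
qed

lemma sq_le: "D > 0 \<Longrightarrow> (\<kappa> - sqrt (\<kappa>\<^sup>2 + 4 * D ^ 3)) / (2 * D) \<le> (\<kappa> + sqrt (\<kappa>\<^sup>2 + 4 * D ^ 3)) / (2 * (D::real))"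
  by (intro divide_right_mono) auto

context zrp
begin

lemma theta_of_props:
  assumes r1: "wmin < ereal \<rho>" and r2: "ereal \<rho> < wmax"
  shows "U (theta_of wmin wmax f \<rho>)" "E (\<lambda>z. real_of_int z) (theta_of wmin wmax f \<rho>) = \<rho>"
proof -
  obtain a where a: "U a" "E (\<lambda>z. real_of_int z) a < \<rho>" using Eminus[OF r1] by blast
  obtain b where b: "U b" "\<rho> < E (\<lambda>z. real_of_int z) b" using Eplus[OF r2] by blast
  have ab: "a \<le> b"
  proof (rule ccontr)
    assume "\<not> a \<le> b"
    hence "b < a" by simp
    hence "E (\<lambda>z. real_of_int z) b < E (\<lambda>z. real_of_int z) a" by (rule mean_strict_mono[OF b(1) a(1)])
    thus False using a b by simp
  qed
  obtain x where x: "a \<le> x" "x \<le> b" "E (\<lambda>z. real_of_int z) x = \<rho>"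
    using IVT'[of "\<lambda>t. E (\<lambda>z. real_of_int z) t" a \<rho> b] a b ab mean_cont[OF a(1) b(1)] by auto
  have Ux: "U x" by (rule U_between[OF a(1) b(1) x(1,2)])
  have uniq: "y = x" if "U y" "E (\<lambda>z. real_of_int z) y = \<rho>" for y
  proof (rule ccontr)
    assume "y \<noteq> x"
    hence "y < x \<or> x < y" by auto
    thus False using mean_strict_mono[OF that(1) Ux] mean_strict_mono[OF Ux that(1)] that(2) x(3) by auto
  qed
  have ex1: "\<exists>!\<theta>. ti < ereal \<theta> \<and> ereal \<theta> < ts \<and> mean_theta wmin wmax f \<theta> = \<rho>"
  proof (rule ex1I[of _ x])
    show "ti < ereal x \<and> ereal x < ts \<and> mean_theta wmin wmax f x = \<rho>"
      using Ux x(3) unfolding U_def mean_eq by simp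
    fix y assume "ti < ereal y \<and> ereal y < ts \<and> mean_theta wmin wmax f y = \<rho>"
    thus "y = x" using uniq unfolding U_def mean_eq by blast
  qed
  have "ti < ereal (theta_of wmin wmax f \<rho>) \<and> ereal (theta_of wmin wmax f \<rho>) < ts
        \<and> mean_theta wmin wmax f (theta_of wmin wmax f \<rho>) = \<rho>"
    unfolding theta_of_def by (rule theI'[OF ex1])
  thus "U (theta_of wmin wmax f \<rho>)" "E (\<lambda>z. real_of_int z) (theta_of wmin wmax f \<rho>) = \<rho>"
    unfolding U_def mean_eq by auto
qed

lemma theta_of_mono:
  assumes "wmin < ereal \<rho>1" "\<rho>1 \<le> \<rho>2" "ereal \<rho>2 < wmax"
  shows "theta_of wmin wmax f \<rho>1 \<le> theta_of wmin wmax f \<rho>2"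
proof (rule ccontr)
  have r1: "ereal \<rho>1 < wmax" using assms by (meson ereal_less_eq(3) le_less_trans)
  have r2: "wmin < ereal \<rho>2" using assms by (meson ereal_less_eq(3) less_le_trans)
  note t1 = theta_of_props[OF assms(1) r1] and t2 = theta_of_props[OF r2 assms(3)]
  assume "\<not> ?thesis"
  hence "theta_of wmin wmax f \<rho>2 < theta_of wmin wmax f \<rho>1" by simp
  from mean_strict_mono[OF t2(1) t1(1) this] show False using t1(2) t2(2) assms(2) by simp
qed

definition R :: "(int \<Rightarrow> real) \<Rightarrow> real \<Rightarrow> real" where
  "R \<Phi> \<theta> = (E (\<lambda>z. real_of_int z * \<Phi> z) \<theta> - E (\<lambda>z. real_of_int z) \<theta> * E \<Phi> \<theta>) / V \<theta>"

definition convexish :: "(int \<Rightarrow> real) \<Rightarrow> bool" where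
  "convexish \<Phi> \<longleftrightarrow> (\<forall>r1 r2. r1 \<le> r2 \<longrightarrow>
     (\<exists>c0 c1. \<forall>z::int. 0 \<le> (real_of_int z - r1) * (real_of_int z - r2) * (\<Phi> z - (c0 + c1 * real_of_int z))))"

lemma R_deriv_nonneg:
  assumes U: "U \<theta>" and pP: "pbd \<Phi>" and cP: "convexish \<Phi>"
  shows "\<exists>d. ((\<lambda>t. R \<Phi> t) has_real_derivative d) (at \<theta>) \<and> 0 \<le> d"
proof -
  define m1 where "m1 = E (\<lambda>z. real_of_int z) \<theta>"
  define m2 where "m2 = E (\<lambda>z. real_of_int z * real_of_int z) \<theta>"
  define m3 where "m3 = E (\<lambda>z. real_of_int z * (real_of_int z * real_of_int z)) \<theta>"
  define n0 where "n0 = E \<Phi> \<theta>"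
  define n1 where "n1 = E (\<lambda>z. real_of_int z * \<Phi> z) \<theta>"
  define n2 where "n2 = E (\<lambda>z. real_of_int z * (real_of_int z * \<Phi> z)) \<theta>"
  have dm1: "((\<lambda>t. E (\<lambda>z. real_of_int z) t) has_real_derivative (m2 - m1 * m1)) (at \<theta>)"
    using E_deriv[OF U pbd_id] unfolding m1_def m2_def by simp
  have dm2: "((\<lambda>t. E (\<lambda>z. real_of_int z * real_of_int z) t) has_real_derivative (m3 - m1 * m2)) (at \<theta>)"
    using E_deriv[OF U, of "\<lambda>z. real_of_int z * real_of_int z"] unfolding m1_def m2_def m3_def by simp
  have dn0: "((\<lambda>t. E \<Phi> t) has_real_derivative (n1 - m1 * n0)) (at \<theta>)"
    using E_deriv[OF U pP] unfolding m1_def n0_def n1_def by simp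
  have dn1: "((\<lambda>t. E (\<lambda>z. real_of_int z * \<Phi> z) t) has_real_derivative (n2 - m1 * n1)) (at \<theta>)"
    using E_deriv[OF U, of "\<lambda>z. real_of_int z * \<Phi> z"] pP unfolding m1_def n1_def n2_def by simp
  define D where "D = m2 - m1 * m1"
  have Dpos: "D > 0" using V_pos[OF U] unfolding D_def V_def m1_def m2_def by simp
  have VD: "V \<theta> = D" unfolding V_def D_def m1_def m2_def ..
  have dV: "((\<lambda>t. V t) has_real_derivative ((m3 - m1 * m2) - ((m2 - m1 * m1) * m1 + (m2 - m1 * m1) * m1))) (at \<theta>)"
  proof -
    have "((\<lambda>t. E (\<lambda>z. real_of_int z) t * E (\<lambda>z. real_of_int z) t) has_real_derivative ((m2 - m1 * m1) * m1 + (m2 - m1 * m1) * m1)) (at \<theta>)"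
      using DERIV_mult[OF dm1 dm1] unfolding m1_def .
    thus ?thesis unfolding V_def[abs_def] by (intro DERIV_diff dm2)
  qed
  have dN: "((\<lambda>t. E (\<lambda>z. real_of_int z * \<Phi> z) t - E (\<lambda>z. real_of_int z) t * E \<Phi> t) has_real_derivative
      ((n2 - m1 * n1) - ((m2 - m1 * m1) * n0 + (n1 - m1 * n0) * m1))) (at \<theta>)"
    by (intro DERIV_diff dn1) (use DERIV_mult[OF dm1 dn0] in \<open>simp add: m1_def n0_def\<close>)
  define N' where "N' = (n2 - m1 * n1) - ((m2 - m1 * m1) * n0 + (n1 - m1 * n0) * m1)"
  define D' where "D' = (m3 - m1 * m2) - ((m2 - m1 * m1) * m1 + (m2 - m1 * m1) * m1)"
  define N where "N = n1 - m1 * n0"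
  have dR: "((\<lambda>t. R \<Phi> t) has_real_derivative ((N' * D - N * D') / (D * D))) (at \<theta>)"
  proof -
    have "V \<theta> \<noteq> 0" using VD Dpos by simp
    from DERIV_divide[OF dN dV this]
    have "((\<lambda>t. (E (\<lambda>z. real_of_int z * \<Phi> z) t - E (\<lambda>z. real_of_int z) t * E \<Phi> t) / V t) has_real_derivative
        (N' * V \<theta> - (E (\<lambda>z. real_of_int z * \<Phi> z) \<theta> - E (\<lambda>z. real_of_int z) \<theta> * E \<Phi> \<theta>) * D') / (V \<theta> * V \<theta>)) (at \<theta>)"
      unfolding N'_def D'_def .
    thus ?thesis unfolding R_def[abs_def] VD N_def n1_def m1_def n0_def .
  qed
  define \<kappa> where "\<kappa> = m3 - 3 * m1 * m2 + 2 * m1 * m1 * m1"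
  define sq where "sq = sqrt (\<kappa>\<^sup>2 + 4 * D ^ 3)"
  define r1 where "r1 = m1 + (\<kappa> - sq) / (2 * D)"
  define r2 where "r2 = m1 + (\<kappa> + sq) / (2 * D)"
  have r12: "r1 \<le> r2" unfolding r1_def r2_def sq_def using sq_le[OF Dpos, of \<kappa>] by simp
  obtain c0 c1 where cc: "\<And>z::int. 0 \<le> (real_of_int z - r1) * (real_of_int z - r2) * (\<Phi> z - (c0 + c1 * real_of_int z))"
    using cP r12 unfolding convexish_def by blast
  define al where "al = D"
  define be where "be = - 2 * D * m1 - \<kappa>"
  define ga where "ga = D * m1 * m1 + \<kappa> * m1 - D * D"
  define k4 where "k4 = - c0 * al - c1 * be"
  define k5 where "k5 = - c0 * be - c1 * ga"
  define k6 where "k6 = - c1 * al"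
  define k7 where "k7 = - c0 * ga"
  define F where "F z = al * (real_of_int z * (real_of_int z * \<Phi> z)) + (be * (real_of_int z * \<Phi> z) + (ga * \<Phi> z
      + (k4 * (real_of_int z * real_of_int z) + (k5 * real_of_int z + (k6 * (real_of_int z * (real_of_int z * real_of_int z)) + k7)))))" for z
  have Fpt: "F z = D * ((real_of_int z - r1) * (real_of_int z - r2) * (\<Phi> z - (c0 + c1 * real_of_int z)))" for z
  proof -
    have q: "D * ((real_of_int z - r1) * (real_of_int z - r2))
        = D * (real_of_int z - m1) * (real_of_int z - m1) - \<kappa> * (real_of_int z - m1) - D * D"
      unfolding r1_def r2_def sq_def by (rule quad_factor[OF Dpos])
    have "D * ((real_of_int z - r1) * (real_of_int z - r2) * (\<Phi> z - (c0 + c1 * real_of_int z)))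
        = (D * ((real_of_int z - r1) * (real_of_int z - r2))) * (\<Phi> z - (c0 + c1 * real_of_int z))" by (simp only: mult.assoc)
    also have "\<dots> = (D * (real_of_int z - m1) * (real_of_int z - m1) - \<kappa> * (real_of_int z - m1) - D * D) * (\<Phi> z - (c0 + c1 * real_of_int z))"
      unfolding q ..
    also have "\<dots> = F z" unfolding F_def al_def be_def ga_def k4_def k5_def k6_def k7_def by (simp add: algebra_simps)
    finally show ?thesis by simp
  qed
  have Xnn: "0 \<le> E F \<theta>"
    by (rule E_nonneg[OF U]) (use Dpos cc in \<open>auto simp: Fpt\<close>)
  have pz: "pbd (\<lambda>z. real_of_int z)" by simp
  have EF: "E F \<theta> = al * n2 + (be * n1 + (ga * n0 + (k4 * m2 + (k5 * m1 + (k6 * m3 + k7)))))"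
    unfolding F_def n2_def n1_def n0_def m1_def m2_def m3_def
    using U pP by (simp only: E_add E_cmult E_const pbd_add pbd_mult pbd_cmult pbd_id pbd_const)
  have "N' * D - N * D' = E F \<theta>"
    unfolding EF N'_def D'_def N_def al_def be_def ga_def k4_def k5_def k6_def k7_def \<kappa>_def D_def
    by (simp add: algebra_simps)
  hence "0 \<le> (N' * D - N * D') / (D * D)" using Xnn Dpos by simp
  thus ?thesis using dR by blast
qed

lemma R_mono:
  assumes "pbd \<Phi>" "convexish \<Phi>" "U a" "U b" "a \<le> b"
  shows "R \<Phi> a \<le> R \<Phi> b"
proof (rule DERIV_nonneg_imp_nondecreasing[OF assms(5)])
  fix x assume "a \<le> x" "x \<le> b"
  hence "U x" by (intro U_between[OF assms(3,4)])
  thus "\<exists>y. ((\<lambda>t. R \<Phi> t) has_real_derivative y) (at x) \<and> 0 \<le> y"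
    using R_deriv_nonneg[OF _ assms(1,2)] by blast
qed

end

lemma fubini_swap:
  fixes F :: "'a \<Rightarrow> 'b \<Rightarrow> real"
  assumes fin: "\<And>z. z \<in> A \<Longrightarrow> finite (Bs z)"
    and sm: "(\<lambda>z. \<Sum>y\<in>Bs z. \<bar>F z y\<bar>) summable_on A"
    and eq: "\<And>z y. (z \<in> A \<and> y \<in> Bs z) \<longleftrightarrow> (y \<in> A' \<and> z \<in> Cs y)"
  shows "(\<lambda>y. \<Sum>\<^sub>\<infinity>z\<in>Cs y. F z y) summable_on A'"
    and "(\<Sum>\<^sub>\<infinity>y\<in>A'. \<Sum>\<^sub>\<infinity>z\<in>Cs y. F z y) = (\<Sum>\<^sub>\<infinity>z\<in>A. \<Sum>y\<in>Bs z. F z y)"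
proof -
  let ?G = "\<lambda>(z, y). F z y"
  have fib: "\<forall>z\<in>A. (\<lambda>y. norm (?G (z, y))) summable_on Bs z" using fin by simp
  have "(\<lambda>z. norm (infsum (\<lambda>y. norm (?G (z, y))) (Bs z))) summable_on A"
  proof -
    have "(\<lambda>z. norm (infsum (\<lambda>y. norm (?G (z, y))) (Bs z))) summable_on A \<longleftrightarrow> (\<lambda>z. \<Sum>y\<in>Bs z. \<bar>F z y\<bar>) summable_on A"
      by (rule summable_on_cong) (use fin in \<open>auto intro!: sum_nonneg\<close>)
    thus ?thesis using sm by simp
  qed
  hence "(\<lambda>x. norm (?G x)) summable_on Sigma A Bs" using fib by (intro Infinite_Sum.abs_summable_on_Sigma_iff[THEN iffD2] conjI) simp_all
  hence S: "?G summable_on Sigma A Bs" by (rule abs_summable_summable)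
  have 1: "(\<Sum>\<^sub>\<infinity>z\<in>A. \<Sum>\<^sub>\<infinity>y\<in>Bs z. F z y) = infsum ?G (Sigma A Bs)"
    using infsum_Sigma'_banach[of F A Bs] S by simp
  have fin2: "(\<Sum>\<^sub>\<infinity>z\<in>A. \<Sum>\<^sub>\<infinity>y\<in>Bs z. F z y) = (\<Sum>\<^sub>\<infinity>z\<in>A. \<Sum>y\<in>Bs z. F z y)"
    by (rule infsum_cong) (use fin in simp)
  have im: "prod.swap ` Sigma A' Cs = Sigma A Bs"
  proof (intro set_eqI iffI)
    fix x assume "x \<in> prod.swap ` Sigma A' Cs"
    then obtain y z where x: "x = (z, y)" "y \<in> A'" "z \<in> Cs y" by auto
    thus "x \<in> Sigma A Bs" using eq[of z y] by simp
  next
    fix x assume "x \<in> Sigma A Bs"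
    then obtain z y where x: "x = (z, y)" "z \<in> A" "y \<in> Bs z" by auto
    hence "(y, z) \<in> Sigma A' Cs" using eq[of z y] by simp
    hence "prod.swap (y, z) \<in> prod.swap ` Sigma A' Cs" by (rule imageI)
    thus "x \<in> prod.swap ` Sigma A' Cs" using x by simp
  qed
  have bij: "bij_betw prod.swap (Sigma A' Cs) (Sigma A Bs)"
    unfolding bij_betw_def using im by (simp add: inj_on_def)
  let ?H = "\<lambda>(y, z). F z y"
  have H: "?H = (\<lambda>x. ?G (prod.swap x))" by auto
  have S': "?H summable_on Sigma A' Cs" unfolding H by (subst summable_on_reindex_bij_betw[OF bij]) (rule S)
  have 2: "(\<Sum>\<^sub>\<infinity>y\<in>A'. \<Sum>\<^sub>\<infinity>z\<in>Cs y. F z y) = infsum ?H (Sigma A' Cs)"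
    using infsum_Sigma'_banach[of "\<lambda>y z. F z y" A' Cs] S' by simp
  have 3: "infsum ?H (Sigma A' Cs) = infsum ?G (Sigma A Bs)"
    unfolding H by (rule infsum_reindex_bij_betw[OF bij])
  show "(\<lambda>y. \<Sum>\<^sub>\<infinity>z\<in>Cs y. F z y) summable_on A'"
    using summable_on_Sigma_banach[of "\<lambda>y z. F z y" A' Cs] S' by simp
  show "(\<Sum>\<^sub>\<infinity>y\<in>A'. \<Sum>\<^sub>\<infinity>z\<in>Cs y. F z y) = (\<Sum>\<^sub>\<infinity>z\<in>A. \<Sum>y\<in>Bs z. F z y)"
    using 1 2 3 fin2 by simp
qed

lemma pbd_linbound: "(\<And>z. \<bar>g z\<bar> \<le> C * \<bar>real_of_int z\<bar>) \<Longrightarrow> pbd g"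
proof -
  assume a: "\<And>z. \<bar>g z\<bar> \<le> C * \<bar>real_of_int z\<bar>"
  have "\<bar>g z\<bar> \<le> \<bar>C\<bar> * (1 + (real_of_int z)\<^sup>2) ^ 1" for z
  proof -
    have "\<bar>real_of_int z\<bar> \<le> 1 + (real_of_int z)\<^sup>2"
    proof (cases "\<bar>real_of_int z\<bar> \<le> 1")
      case True thus ?thesis by (simp add: add_increasing2)
    next
      case False
      hence "\<bar>real_of_int z\<bar> \<le> \<bar>real_of_int z\<bar> * \<bar>real_of_int z\<bar>"
        using mult_left_mono[of 1 "\<bar>real_of_int z\<bar>" "\<bar>real_of_int z\<bar>"] by linarith
      also have "\<dots> = real_of_int z * real_of_int z" by (rule abs_mult_self_eq)
      finally show ?thesis by (simp add: power2_eq_square)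
    qed
    have "\<bar>g z\<bar> \<le> C * \<bar>real_of_int z\<bar>" by (rule a)
    also have "\<dots> \<le> \<bar>C\<bar> * \<bar>real_of_int z\<bar>" by (intro mult_right_mono) auto
    also have "\<dots> \<le> \<bar>C\<bar> * (1 + (real_of_int z)\<^sup>2)"
      by (intro mult_left_mono) (use \<open>\<bar>real_of_int z\<bar> \<le> 1 + (real_of_int z)\<^sup>2\<close> in auto)
    finally show ?thesis by simp
  qed
  thus ?thesis unfolding pbd_def by blast
qed

lemma sum_ivl_abs_le:
  fixes \<phi> :: "int \<Rightarrow> real"
  assumes "\<And>y. \<bar>\<phi> y\<bar> \<le> B"
  shows "(\<Sum>y\<in>{0..<z}. \<bar>\<phi> y\<bar>) \<le> B * \<bar>real_of_int z\<bar>" and "(\<Sum>y\<in>{z..<0}. \<bar>\<phi> y\<bar>) \<le> B * \<bar>real_of_int z\<bar>"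
proof -
  have B0: "0 \<le> B" using assms[of 0] by linarith
  have s1: "(\<Sum>y\<in>{0..<z}. \<bar>\<phi> y\<bar>) \<le> of_nat (card {0..<z}) * B" by (rule sum_bounded_above) (use assms in auto)
  have c1: "of_nat (card {0..<z}) \<le> \<bar>real_of_int z\<bar>" by (cases "0 \<le> z") auto
  have "of_nat (card {0..<z}) * B \<le> \<bar>real_of_int z\<bar> * B" by (rule mult_right_mono[OF c1 B0])
  hence "(\<Sum>y\<in>{0..<z}. \<bar>\<phi> y\<bar>) \<le> \<bar>real_of_int z\<bar> * B" using s1 by linarith
  thus "(\<Sum>y\<in>{0..<z}. \<bar>\<phi> y\<bar>) \<le> B * \<bar>real_of_int z\<bar>" by (simp only: mult.commute)
  have s2: "(\<Sum>y\<in>{z..<0}. \<bar>\<phi> y\<bar>) \<le> of_nat (card {z..<0}) * B" by (rule sum_bounded_above) (use assms in auto)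
  have c2: "of_nat (card {z..<0}) \<le> \<bar>real_of_int z\<bar>" by (cases "0 \<le> z") auto
  have "of_nat (card {z..<0}) * B \<le> \<bar>real_of_int z\<bar> * B" by (rule mult_right_mono[OF c2 B0])
  hence "(\<Sum>y\<in>{z..<0}. \<bar>\<phi> y\<bar>) \<le> \<bar>real_of_int z\<bar> * B" using s2 by linarith
  thus "(\<Sum>y\<in>{z..<0}. \<bar>\<phi> y\<bar>) \<le> B * \<bar>real_of_int z\<bar>" by (simp only: mult.commute)
qed

lemma pbd_sum_plus: "(\<And>y. \<bar>\<phi> y\<bar> \<le> B) \<Longrightarrow> pbd (\<lambda>z. \<Sum>y\<in>{0..<z}. \<phi> y)"
  by (rule pbd_linbound[of _ B]) (rule order.trans[OF sum_abs sum_ivl_abs_le(1)])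

lemma pbd_sum_minus: "(\<And>y. \<bar>\<phi> y\<bar> \<le> B) \<Longrightarrow> pbd (\<lambda>z. \<Sum>y\<in>{z..<0}. \<phi> y)"
  by (rule pbd_linbound[of _ B]) (rule order.trans[OF sum_abs sum_ivl_abs_le(2)])

lemma pbd_Phi: "(\<And>y. \<bar>\<phi> y\<bar> \<le> B) \<Longrightarrow> pbd (Phi \<phi>)"
proof -
  assume b: "\<And>y. \<bar>\<phi> y\<bar> \<le> B"
  show ?thesis unfolding Phi_def[abs_def] by (rule pbd_diff[OF pbd_sum_plus[OF b] pbd_sum_minus[OF b]])
qed

context zrp
begin

lemma convexish_Phi:
  assumes "mono \<phi>"
  shows "convexish (Phi \<phi>)"
  unfolding convexish_def
proof (intro allI impI)
  fix r1 r2 :: real assume "r1 \<le> r2"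
  thus "\<exists>c0 c1. \<forall>z::int. 0 \<le> (real_of_int z - r1) * (real_of_int z - r2) * (Phi \<phi> z - (c0 + c1 * real_of_int z))"
    by (rule quad_sign[OF assms])
qed

lemma sum_by_parts:
  assumes U: "U \<theta>" and bnd: "\<And>y. \<bar>\<phi> y\<bar> \<le> B"
    and zero: "Gs (\<lambda>z. real_of_int z - m) \<theta> = 0"
  shows "(\<Sum>\<^sub>\<infinity>y\<in>I. \<phi> y * (\<Sum>\<^sub>\<infinity>z\<in>{z\<in>I. y < z}. (real_of_int z - m) * p \<theta> z))
       = Gs (\<lambda>z. (real_of_int z - m) * Phi \<phi> z) \<theta>"
proof -
  define q where "q z = (real_of_int z - m) * p \<theta> z" for z
  define T where "T y = (\<Sum>\<^sub>\<infinity>z\<in>{z\<in>I. y < z}. q z)" for y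
  have B0: "0 \<le> B" using bnd[of 0] by linarith
  have qs: "(\<lambda>z. g z * q z) summable_on S" if "pbd g" "S \<subseteq> I" for g S
  proof -
    have "(\<lambda>z. (g z * (real_of_int z - m)) * p \<theta> z) summable_on S"
      by (rule summable_sub[OF U]) (use that in auto)
    thus ?thesis unfolding q_def by (simp add: mult.assoc)
  qed
  have qs1: "q summable_on S" if "S \<subseteq> I" for S using qs[of "\<lambda>_. 1" S] that by simp
  have maj: "(\<lambda>z. (\<Sum>y\<in>Bs z. \<bar>\<phi> y * q z\<bar>)) summable_on I"
    if "\<And>z. (\<Sum>y\<in>Bs z. \<bar>\<phi> y\<bar>) \<le> B * \<bar>real_of_int z\<bar>" for Bs
  proof -
    have "(\<lambda>z. (B * \<bar>real_of_int z\<bar> * \<bar>real_of_int z - m\<bar>) * p \<theta> z) summable_on I"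
      by (rule summable_sub[OF U]) auto
    thus ?thesis
    proof (rule summable_on_comparison_test)
      fix z assume z: "z \<in> I"
      have "(\<Sum>y\<in>Bs z. \<bar>\<phi> y * q z\<bar>) = (\<Sum>y\<in>Bs z. \<bar>\<phi> y\<bar>) * \<bar>q z\<bar>" by (simp add: abs_mult sum_distrib_right)
      also have "\<dots> \<le> (B * \<bar>real_of_int z\<bar>) * \<bar>q z\<bar>" by (intro mult_right_mono that) auto
      also have "\<bar>q z\<bar> = \<bar>real_of_int z - m\<bar> * p \<theta> z" unfolding q_def using p_nonneg[OF z, of \<theta>] by (simp add: abs_mult)
      finally show "(\<Sum>y\<in>Bs z. \<bar>\<phi> y * q z\<bar>) \<le> B * \<bar>real_of_int z\<bar> * \<bar>real_of_int z - m\<bar> * p \<theta> z"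
        by (simp add: mult_ac)
      show "0 \<le> (\<Sum>y\<in>Bs z. \<bar>\<phi> y * q z\<bar>)" by (rule sum_nonneg) simp
    qed
  qed
  note fp = fubini_swap[of I "\<lambda>z. {0..<z}" "\<lambda>z y. \<phi> y * q z" "{y\<in>I. 0 \<le> y}" "\<lambda>y. {z\<in>I. y < z}"]
  have eqp: "(z \<in> I \<and> y \<in> {0..<z}) \<longleftrightarrow> (y \<in> {y\<in>I. 0 \<le> y} \<and> z \<in> {z\<in>I. y < z})" for z y
    using I_between[OF zero_I, of z y] by auto
  have fp1: "(\<lambda>y. \<Sum>\<^sub>\<infinity>z\<in>{z\<in>I. y < z}. \<phi> y * q z) summable_on {y\<in>I. 0 \<le> y}"
    and fp2: "(\<Sum>\<^sub>\<infinity>y\<in>{y\<in>I. 0 \<le> y}. \<Sum>\<^sub>\<infinity>z\<in>{z\<in>I. y < z}. \<phi> y * q z) = (\<Sum>\<^sub>\<infinity>z\<in>I. \<Sum>y\<in>{0..<z}. \<phi> y * q z)"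
  proof -
    have majp: "(\<lambda>z. \<Sum>y\<in>{0..<z}. \<bar>\<phi> y * q z\<bar>) summable_on I" by (rule maj) (rule sum_ivl_abs_le(1)[OF bnd])
    show "(\<lambda>y. \<Sum>\<^sub>\<infinity>z\<in>{z\<in>I. y < z}. \<phi> y * q z) summable_on {y\<in>I. 0 \<le> y}"
      by (rule fp(1)[OF _ majp eqp]) simp
    show "(\<Sum>\<^sub>\<infinity>y\<in>{y\<in>I. 0 \<le> y}. \<Sum>\<^sub>\<infinity>z\<in>{z\<in>I. y < z}. \<phi> y * q z) = (\<Sum>\<^sub>\<infinity>z\<in>I. \<Sum>y\<in>{0..<z}. \<phi> y * q z)"
      by (rule fp(2)[OF _ majp eqp]) simp
  qed
  note fm = fubini_swap[of I "\<lambda>z. {z..<0}" "\<lambda>z y. \<phi> y * q z" "{y\<in>I. y < 0}" "\<lambda>y. {z\<in>I. z \<le> y}"]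
  have eqm: "(z \<in> I \<and> y \<in> {z..<0}) \<longleftrightarrow> (y \<in> {y\<in>I. y < 0} \<and> z \<in> {z\<in>I. z \<le> y})" for z y
    using I_between[OF _ zero_I, of z y] by auto
  have fm1: "(\<lambda>y. \<Sum>\<^sub>\<infinity>z\<in>{z\<in>I. z \<le> y}. \<phi> y * q z) summable_on {y\<in>I. y < 0}"
    and fm2: "(\<Sum>\<^sub>\<infinity>y\<in>{y\<in>I. y < 0}. \<Sum>\<^sub>\<infinity>z\<in>{z\<in>I. z \<le> y}. \<phi> y * q z) = (\<Sum>\<^sub>\<infinity>z\<in>I. \<Sum>y\<in>{z..<0}. \<phi> y * q z)"
  proof -
    have majm: "(\<lambda>z. \<Sum>y\<in>{z..<0}. \<bar>\<phi> y * q z\<bar>) summable_on I" by (rule maj) (rule sum_ivl_abs_le(2)[OF bnd])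
    show "(\<lambda>y. \<Sum>\<^sub>\<infinity>z\<in>{z\<in>I. z \<le> y}. \<phi> y * q z) summable_on {y\<in>I. y < 0}"
      by (rule fm(1)[OF _ majm eqm]) simp
    show "(\<Sum>\<^sub>\<infinity>y\<in>{y\<in>I. y < 0}. \<Sum>\<^sub>\<infinity>z\<in>{z\<in>I. z \<le> y}. \<phi> y * q z) = (\<Sum>\<^sub>\<infinity>z\<in>I. \<Sum>y\<in>{z..<0}. \<phi> y * q z)"
      by (rule fm(2)[OF _ majm eqm]) simp
  qed
  have inner_p: "(\<Sum>\<^sub>\<infinity>z\<in>{z\<in>I. y < z}. \<phi> y * q z) = \<phi> y * T y" for y
    unfolding T_def by (rule infsum_cmult_right')
  have Tm: "(\<Sum>\<^sub>\<infinity>z\<in>{z\<in>I. z \<le> y}. q z) = - T y" for y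
  proof -
    have se: "I = {z\<in>I. z \<le> y} \<union> {z\<in>I. y < z}" by auto
    have "(\<Sum>\<^sub>\<infinity>z\<in>I. q z) = (\<Sum>\<^sub>\<infinity>z\<in>{z\<in>I. z \<le> y} \<union> {z\<in>I. y < z}. q z)"
      using se by simp
    also have "\<dots> = (\<Sum>\<^sub>\<infinity>z\<in>{z\<in>I. z \<le> y}. q z) + T y"
      unfolding T_def by (rule infsum_Un_disjoint) (auto intro: qs1)
    finally have "(\<Sum>\<^sub>\<infinity>z\<in>I. q z) = (\<Sum>\<^sub>\<infinity>z\<in>{z\<in>I. z \<le> y}. q z) + T y" .
    moreover have "(\<Sum>\<^sub>\<infinity>z\<in>I. q z) = 0" using zero unfolding Gs_def q_def .
    ultimately show ?thesis by simp
  qed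
  have inner_m: "(\<Sum>\<^sub>\<infinity>z\<in>{z\<in>I. z \<le> y}. \<phi> y * q z) = - (\<phi> y * T y)" for y
    using Tm[of y] by (simp add: infsum_cmult_right')
  have sp: "(\<lambda>y. \<phi> y * T y) summable_on {y\<in>I. 0 \<le> y}" using fp1 unfolding inner_p .
  have sm: "(\<lambda>y. \<phi> y * T y) summable_on {y\<in>I. y < 0}"
    using fm1 unfolding inner_m by (simp only: summable_on_uminus)
  have "(\<Sum>\<^sub>\<infinity>y\<in>I. \<phi> y * T y) = (\<Sum>\<^sub>\<infinity>y\<in>{y\<in>I. 0 \<le> y}. \<phi> y * T y) + (\<Sum>\<^sub>\<infinity>y\<in>{y\<in>I. y < 0}. \<phi> y * T y)"
  proof -
    have se: "I = {y\<in>I. 0 \<le> y} \<union> {y\<in>I. y < 0}" by auto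
    have "(\<Sum>\<^sub>\<infinity>y\<in>I. \<phi> y * T y) = (\<Sum>\<^sub>\<infinity>y\<in>{y\<in>I. 0 \<le> y} \<union> {y\<in>I. y < 0}. \<phi> y * T y)"
      using se by simp
    also have "\<dots> = (\<Sum>\<^sub>\<infinity>y\<in>{y\<in>I. 0 \<le> y}. \<phi> y * T y) + (\<Sum>\<^sub>\<infinity>y\<in>{y\<in>I. y < 0}. \<phi> y * T y)"
      by (rule infsum_Un_disjoint[OF sp sm]) auto
    finally show ?thesis .
  qed
  also have "(\<Sum>\<^sub>\<infinity>y\<in>{y\<in>I. 0 \<le> y}. \<phi> y * T y) = (\<Sum>\<^sub>\<infinity>z\<in>I. q z * (\<Sum>y\<in>{0..<z}. \<phi> y))"
  proof -
    have e: "(\<Sum>y\<in>{0..<z}. \<phi> y * q z) = q z * (\<Sum>y\<in>{0..<z}. \<phi> y)" for z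
      by (simp add: sum_distrib_left mult.commute)
    show ?thesis using fp2 unfolding inner_p e .
  qed
  also have "(\<Sum>\<^sub>\<infinity>y\<in>{y\<in>I. y < 0}. \<phi> y * T y) = - (\<Sum>\<^sub>\<infinity>z\<in>I. q z * (\<Sum>y\<in>{z..<0}. \<phi> y))"
  proof -
    have "(\<Sum>\<^sub>\<infinity>y\<in>{y\<in>I. y < 0}. \<phi> y * T y) = - (\<Sum>\<^sub>\<infinity>y\<in>{y\<in>I. y < 0}. - (\<phi> y * T y))"
      by (simp add: infsum_uminus)
    also have "\<dots> = - (\<Sum>\<^sub>\<infinity>z\<in>I. q z * (\<Sum>y\<in>{z..<0}. \<phi> y))"
    proof -
      have e: "(\<Sum>y\<in>{z..<0}. \<phi> y * q z) = q z * (\<Sum>y\<in>{z..<0}. \<phi> y)" for z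
        by (simp add: sum_distrib_left mult.commute)
      show ?thesis using fm2 unfolding inner_m e by simp
    qed
    finally show ?thesis .
  qed
  also have "(\<Sum>\<^sub>\<infinity>z\<in>I. q z * (\<Sum>y\<in>{0..<z}. \<phi> y)) + - (\<Sum>\<^sub>\<infinity>z\<in>I. q z * (\<Sum>y\<in>{z..<0}. \<phi> y))
      = (\<Sum>\<^sub>\<infinity>z\<in>I. q z * (\<Sum>y\<in>{0..<z}. \<phi> y) + - (q z * (\<Sum>y\<in>{z..<0}. \<phi> y)))"
  proof -
    have s1: "(\<lambda>z. q z * (\<Sum>y\<in>{0..<z}. \<phi> y)) summable_on I"
      using qs[OF pbd_sum_plus[OF bnd] order_refl] by (simp add: mult.commute)
    have s2: "(\<lambda>z. - (q z * (\<Sum>y\<in>{z..<0}. \<phi> y))) summable_on I"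
      using qs[OF pbd_sum_minus[OF bnd] order_refl] by (simp add: mult.commute summable_on_uminus)
    show ?thesis using infsum_add[OF s1 s2] by (simp add: infsum_uminus)
  qed
  also have "\<dots> = Gs (\<lambda>z. (real_of_int z - m) * Phi \<phi> z) \<theta>"
    unfolding Gs_def q_def Phi_def by (rule infsum_cong) (simp add: algebra_simps)
  finally show ?thesis unfolding T_def q_def .
qed

end

context zrp
begin

lemma extend:
  assumes mono: "mono_on I \<phi>" and bnd: "\<forall>y\<in>I. \<bar>\<phi> y\<bar> \<le> B"
  shows "\<exists>\<phi>e. mono \<phi>e \<and> (\<forall>y\<in>I. \<phi>e y = \<phi> y) \<and> (\<forall>y. \<bar>\<phi>e y\<bar> \<le> B)"
proof -
  define kk where "kk = (THE k::int. wmin = ereal (real_of_int k))"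
  define KK where "KK = (THE k::int. wmax = ereal (real_of_int k))"
  have kk: "wmin = ereal (real_of_int kk)" "kk \<le> 0" if nm: "wmin \<noteq> -\<infinity>"
  proof -
    obtain k where k: "k \<le> 0" "wmin = ereal (real_of_int k)" using wmin nm by auto
    have "kk = k" unfolding kk_def using k by (intro the_equality) auto
    thus "wmin = ereal (real_of_int kk)" "kk \<le> 0" using k by auto
  qed
  have KK: "wmax = ereal (real_of_int KK)" "1 \<le> KK" if nm: "wmax \<noteq> \<infinity>"
  proof -
    obtain k where k: "1 \<le> k" "wmax = ereal (real_of_int k)" using wmax nm by auto
    have "KK = k" unfolding KK_def using k by (intro the_equality) auto
    thus "wmax = ereal (real_of_int KK)" "1 \<le> KK" using k by auto
  qed
  define lo where "lo y = (if wmin = -\<infinity> then y else max kk y)" for y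
  define c where "c y = (if wmax = \<infinity> then lo y else min KK (lo y))" for y
  have cI: "c y \<in> I" for y
    unfolding I_iff
  proof (intro conjI allI impI)
    fix k assume k: "wmin = ereal (real_of_int k)"
    hence nm: "wmin \<noteq> -\<infinity>" by auto
    have kk': "k = kk" using kk(1)[OF nm] k by simp
    have "kk \<le> lo y" unfolding lo_def using nm by simp
    moreover have "kk \<le> KK" if "wmax \<noteq> \<infinity>" using kk(2)[OF nm] KK(2)[OF that] by simp
    ultimately show "k \<le> c y" unfolding c_def kk' by auto
  next
    fix k assume k: "wmax = ereal (real_of_int k)"
    hence nm: "wmax \<noteq> \<infinity>" by auto
    have "k = KK" using KK(1)[OF nm] k by simp
    thus "c y \<le> k" unfolding c_def using nm by simp
  qed
  have cid: "c y = y" if "y \<in> I" for y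
  proof -
    have "lo y = y"
    proof (cases "wmin = -\<infinity>")
      case False thus ?thesis unfolding lo_def using that kk(1)[OF False] unfolding I_iff by auto
    qed (simp add: lo_def)
    moreover have "wmax \<noteq> \<infinity> \<Longrightarrow> y \<le> KK" using that KK(1) unfolding I_iff by auto
    ultimately show ?thesis unfolding c_def by auto
  qed
  have cmono: "mono c" unfolding mono_def c_def lo_def by auto
  define \<phi>e where "\<phi>e y = \<phi> (c y)" for y
  have "mono \<phi>e" unfolding mono_def \<phi>e_def
    using cmono cI by (auto intro: mono_onD[OF mono] simp: mono_def)
  moreover have "\<forall>y\<in>I. \<phi>e y = \<phi> y" unfolding \<phi>e_def using cid by simp
  moreover have "\<forall>y. \<bar>\<phi>e y\<bar> \<le> B" unfolding \<phi>e_def using cI bnd by simp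
  ultimately show ?thesis by blast
qed

lemma key:
  assumes r1: "wmin < ereal \<rho>" and r2: "ereal \<rho> < wmax"
    and e1: "\<And>y. y \<in> I \<Longrightarrow> \<phi>e y = \<phi> y" and bnd: "\<And>y. \<bar>\<phi>e y\<bar> \<le> B"
  shows "(\<Sum>\<^sub>\<infinity>y\<in>I. \<phi> y * muhat wmin wmax f \<rho> y) = R (Phi \<phi>e) (theta_of wmin wmax f \<rho>)"
proof -
  define \<theta> where "\<theta> = theta_of wmin wmax f \<rho>"
  have U: "U \<theta>" and m: "E (\<lambda>z. real_of_int z) \<theta> = \<rho>" using theta_of_props[OF r1 r2] unfolding \<theta>_def by auto
  define Z where "Z = Zs \<theta>"
  have Z: "Z > 0" unfolding Z_def using Zs_pos[OF U] .
  have mu: "mu_rho wmin wmax f \<rho> z = p \<theta> z / Z" for z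
    unfolding mu_rho_def mu_theta_eq \<theta>_def Z_def ..
  have var: "var_rho wmin wmax f \<rho> = V \<theta>"
  proof -
    have "var_rho wmin wmax f \<rho> = (\<Sum>\<^sub>\<infinity>z\<in>I. (1 / Z) * ((real_of_int z - \<rho>) * (real_of_int z - \<rho>) * p \<theta> z))"
      unfolding var_rho_def mu by (rule infsum_cong) (simp add: power2_eq_square)
    also have "\<dots> = E (\<lambda>z. (real_of_int z - \<rho>) * (real_of_int z - \<rho>)) \<theta>"
      unfolding E_def Gs_def Z_def by (simp only: infsum_cmult_right') simp
    also have "\<dots> = V \<theta>" unfolding V_eq[OF U] V_def m by simp
    finally show ?thesis .
  qed
  define T where "T y = (\<Sum>\<^sub>\<infinity>z\<in>{z\<in>I. y < z}. (real_of_int z - \<rho>) * p \<theta> z)" for y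
  have mh: "muhat wmin wmax f \<rho> y = (1 / V \<theta>) * ((1 / Z) * T y)" for y
  proof -
    have "(\<Sum>\<^sub>\<infinity>z\<in>{z\<in>I. y < z}. (real_of_int z - \<rho>) * mu_rho wmin wmax f \<rho> z)
        = (\<Sum>\<^sub>\<infinity>z\<in>{z\<in>I. y < z}. (1 / Z) * ((real_of_int z - \<rho>) * p \<theta> z))"
      unfolding mu by (rule infsum_cong) simp
    also have "\<dots> = (1 / Z) * T y" unfolding T_def by (rule infsum_cmult_right')
    finally show ?thesis unfolding muhat_def var by simp
  qed
  have zero: "Gs (\<lambda>z. real_of_int z - \<rho>) \<theta> = 0"
  proof -
    have "E (\<lambda>z. real_of_int z - \<rho>) \<theta> = 0" using E_minus_const[OF U] m by simp
    thus ?thesis unfolding E_def using Z unfolding Z_def by simp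
  qed
  have "(\<Sum>\<^sub>\<infinity>y\<in>I. \<phi> y * muhat wmin wmax f \<rho> y) = (\<Sum>\<^sub>\<infinity>y\<in>I. (1 / V \<theta> * (1 / Z)) * (\<phi>e y * T y))"
    unfolding mh by (rule infsum_cong) (simp add: e1)
  also have "\<dots> = (1 / V \<theta> * (1 / Z)) * (\<Sum>\<^sub>\<infinity>y\<in>I. \<phi>e y * T y)" by (rule infsum_cmult_right')
  also have "(\<Sum>\<^sub>\<infinity>y\<in>I. \<phi>e y * T y) = Gs (\<lambda>z. (real_of_int z - \<rho>) * Phi \<phi>e z) \<theta>"
    unfolding T_def by (rule sum_by_parts[OF U bnd zero])
  also have "(1 / V \<theta> * (1 / Z)) * Gs (\<lambda>z. (real_of_int z - \<rho>) * Phi \<phi>e z) \<theta>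
      = E (\<lambda>z. (real_of_int z - \<rho>) * Phi \<phi>e z) \<theta> / V \<theta>"
    unfolding E_def Z_def by simp
  also have "E (\<lambda>z. (real_of_int z - \<rho>) * Phi \<phi>e z) \<theta>
      = E (\<lambda>z. real_of_int z * Phi \<phi>e z) \<theta> - \<rho> * E (Phi \<phi>e) \<theta>"
  proof -
    have pP: "pbd (Phi \<phi>e)" by (rule pbd_Phi[OF bnd])
    have "(\<lambda>z. (real_of_int z - \<rho>) * Phi \<phi>e z) = (\<lambda>z. real_of_int z * Phi \<phi>e z + (- \<rho>) * Phi \<phi>e z)"
      by (auto simp: algebra_simps)
    moreover have "E (\<lambda>z. real_of_int z * Phi \<phi>e z + (- \<rho>) * Phi \<phi>e z) \<theta>
        = E (\<lambda>z. real_of_int z * Phi \<phi>e z) \<theta> + E (\<lambda>z. (- \<rho>) * Phi \<phi>e z) \<theta>"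
      by (rule E_add[OF U]) (use pP in simp_all)
    moreover have "E (\<lambda>z. (- \<rho>) * Phi \<phi>e z) \<theta> = (- \<rho>) * E (Phi \<phi>e) \<theta>" by (rule E_cmult)
    ultimately show ?thesis by simp
  qed
  also have "(E (\<lambda>z. real_of_int z * Phi \<phi>e z) \<theta> - \<rho> * E (Phi \<phi>e) \<theta>) / V \<theta> = R (Phi \<phi>e) \<theta>"
    unfolding R_def m ..
  finally show ?thesis unfolding \<theta>_def .
qed

lemma main:
  assumes bnd: "\<forall>y\<in>I. \<bar>\<phi> y\<bar> \<le> B" and mono: "mono_on I \<phi>"
    and r1: "wmin < ereal \<rho>1" and r12: "\<rho>1 \<le> \<rho>2" and r2: "ereal \<rho>2 < wmax"
  shows "(\<Sum>\<^sub>\<infinity>y\<in>I. \<phi> y * muhat wmin wmax f \<rho>1 y) \<le> (\<Sum>\<^sub>\<infinity>y\<in>I. \<phi> y * muhat wmin wmax f \<rho>2 y)"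
proof -
  obtain \<phi>e where pe: "mono \<phi>e" "\<forall>y\<in>I. \<phi>e y = \<phi> y" "\<forall>y. \<bar>\<phi>e y\<bar> \<le> B"
    using extend[OF mono bnd] by blast
  have r1': "ereal \<rho>1 < wmax" using r12 r2 by (meson ereal_less_eq(3) le_less_trans)
  have r2': "wmin < ereal \<rho>2" using r12 r1 by (meson ereal_less_eq(3) less_le_trans)
  have k1: "(\<Sum>\<^sub>\<infinity>y\<in>I. \<phi> y * muhat wmin wmax f \<rho>1 y) = R (Phi \<phi>e) (theta_of wmin wmax f \<rho>1)"
    by (rule key[OF r1 r1']) (use pe in auto)
  have k2: "(\<Sum>\<^sub>\<infinity>y\<in>I. \<phi> y * muhat wmin wmax f \<rho>2 y) = R (Phi \<phi>e) (theta_of wmin wmax f \<rho>2)"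
    by (rule key[OF r2' r2]) (use pe in auto)
  have "R (Phi \<phi>e) (theta_of wmin wmax f \<rho>1) \<le> R (Phi \<phi>e) (theta_of wmin wmax f \<rho>2)"
  proof (rule R_mono)
    show "pbd (Phi \<phi>e)" using pe(3) by (intro pbd_Phi) auto
    show "convexish (Phi \<phi>e)" by (rule convexish_Phi[OF pe(1)])
    show "U (theta_of wmin wmax f \<rho>1)" by (rule theta_of_props(1)[OF r1 r1'])
    show "U (theta_of wmin wmax f \<rho>2)" by (rule theta_of_props(1)[OF r2' r2])
    show "theta_of wmin wmax f \<rho>1 \<le> theta_of wmin wmax f \<rho>2" by (rule theta_of_mono[OF r1 r12 r2])
  qed
  thus ?thesis unfolding k1 k2 .
qed

end

theorem propositionB4:
  fixes wmin wmax :: ereal and f :: "int \<Rightarrow> real" and \<phi> :: "int \<Rightarrow> real"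
  assumes wmin: "wmin = -\<infinity> \<or> (\<exists>k::int. k \<le> 0 \<and> wmin = ereal (real_of_int k))"
    and wmax: "wmax = \<infinity> \<or> (\<exists>k::int. 1 \<le> k \<and> wmax = ereal (real_of_int k))"
    and f_nonneg: "\<forall>z\<in>Iset wmin wmax. 0 \<le> f z"
    and f_mono: "mono_on (Iset wmin wmax) f"
    and f_wmin: "\<forall>k::int. wmin = ereal (real_of_int k) \<longrightarrow> f k = 0"
    and f_pos: "\<forall>z\<in>Iset wmin wmax. wmin < ereal (real_of_int z) \<longrightarrow> 0 < f z"
    and theta_lt: "theta_inf wmin f < theta_sup wmax f"
    and phi_bdd: "\<exists>B. \<forall>y\<in>Iset wmin wmax. \<bar>\<phi> y\<bar> \<le> B"
    and phi_mono: "mono_on (Iset wmin wmax) \<phi>"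
    and rho1: "wmin < ereal \<rho>1" and rho12: "\<rho>1 \<le> \<rho>2" and rho2: "ereal \<rho>2 < wmax"
  shows "(\<Sum>\<^sub>\<infinity>y\<in>Iset wmin wmax. \<phi> y * muhat wmin wmax f \<rho>1 y)
           \<le> (\<Sum>\<^sub>\<infinity>y\<in>Iset wmin wmax. \<phi> y * muhat wmin wmax f \<rho>2 y)"
proof -
  interpret zrp wmin wmax f
    by (unfold_locales) (use wmin wmax f_mono f_pos theta_lt in auto)
  obtain B where B: "\<forall>y\<in>Iset wmin wmax. \<bar>\<phi> y\<bar> \<le> B" using phi_bdd by blast
  show ?thesis by (rule main[OF B phi_mono rho1 rho12 rho2])
qed

end
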